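(* Let $D=\{D_1,\dots,D_n\}$ be a set of pairwise disjoint closed balls in $\mathbb{R}^d$ and $s>0$. The set $W$ output by the algorithm ComputeWSPD$(D,s)$ described below contains $O(n)$ pairs, where the constant in the $O$-notation depends only on $s$ and $d$.
   Context: Ball $D_i$ has center $c_i$ and radius $r_i\ge0$. $R(X)$ is the smallest axis-parallel box containing $X$, $L_{\max}(R)$ its longest side length; for balls $C,C'$ with centers $c,c'$ and radii $r,r'$, $d(C,C')=|cc'|-(r+r')$. Algorithm ComputeWSPD$(D,s)$: let $F=\{c_1,\dots,c_n\}$; let $T$ be a (Callahan–Kosaraju) split tree of $F$: a binary tree whose leaves are the points of $F$, each node $u$ storing $R(S_u)$ where $S_u$ is the set of points at leaves of the subtree of $u$; let $W'$ be the well-separated pair decomposition of $F$ w.r.t. $3s+6$ computed from $T$ by the Callahan–Kosaraju algorithm ($O(n)$ pairs, each of the form $\{S_v,S_w\}$ for nodes $v,w$ of $T$). For $X'\subseteq F$ let $X$ denote the set of balls whose centers lie in $X'$. Start with $W=\emptyset$; for each $\{A',B'\}\in W'$: if $|A'|=|B'|=1$ or $|A'|,|B'|>1$, add $\{A,B\}$ to $W$; otherwise, say $A'=\{c_k\}=S_v$ ($v$ a leaf) and $B'=S_w$, add to $W$ the pairs produced by FindPairs$(v,w)$. FindPairs$(v,w)$ with $S_v=\{c_k\}$: let $C_w$ be the ball of radius $(\sqrt d/2)L_{\max}(R(S_w))$ centered at the center of $R(S_w)$; if $d(c_k,C_w)-r_k\ge(3s+4)\,\mathrm{radius}(C_w)$,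 return the single pair $\{\{D_k\},\text{balls with centers in }S_w\}$; otherwise return the union of FindPairs$(v,w_l)$ and FindPairs$(v,w_r)$ for the two children $w_l,w_r$ of $w$. *)

theory Defs
  imports "HOL-Analysis.Analysis"
begin

datatype 'a stree = SLeaf 'a | SNode "'a stree" "'a stree"

fun leaves :: "'a stree \<Rightarrow> 'a list" where
  "leaves (SLeaf p) = [p]"
| "leaves (SNode l r) = leaves l @ leaves r"

definition pts :: "'a stree \<Rightarrow> 'a set" where
  "pts t = set (leaves t)"

definition bb_lo :: "(real^'d) set \<Rightarrow> 'd \<Rightarrow> real" where
  "bb_lo X i = Min ((\<lambda>p. p $ i) ` X)"

definition bb_hi :: "(real^'d) set \<Rightarrow> 'd \<Rightarrow> real" where
  "bb_hi X i = Max ((\<lambda>p. p $ i) ` X)"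

definition bbox :: "(real^'d) set \<Rightarrow> (real^'d) set" where
  "bbox X = cbox (\<chi> i. bb_lo X i) (\<chi> i. bb_hi X i)"

definition Lmax :: "(real^'d) set \<Rightarrow> real" where
  "Lmax X = Max (range (\<lambda>i. bb_hi X i - bb_lo X i))"

definition bb_center :: "(real^'d) set \<Rightarrow> real^'d" where
  "bb_center X = (\<chi> i. (bb_lo X i + bb_hi X i) / 2)"

text \<open>Radius (sqrt d / 2) L_max(R(X)) of the ball circumscribing R(X).\<close>
definition encl_rad :: "(real^'d) set \<Rightarrow> real" where
  "encl_rad X = sqrt (real CARD('d)) / 2 * Lmax X"

fun split_tree :: "(real^'d) stree \<Rightarrow> bool" where
  "split_tree (SLeaf p) = True"
| "split_tree (SNode l r) =
     (split_tree l \<and> split_tree r \<and>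
      (let S = pts (SNode l r) in
       \<exists>i. bb_hi S i - bb_lo S i = Lmax S \<and>
         (let m = (bb_lo S i + bb_hi S i) / 2 in
            ((\<forall>p\<in>pts l. p $ i \<le> m) \<and> (\<forall>p\<in>pts r. m \<le> p $ i)) \<or>
            ((\<forall>p\<in>pts r. p $ i \<le> m) \<and> (\<forall>p\<in>pts l. m \<le> p $ i)))))"

text \<open>Well-separation test w.r.t. s of two point sets, via balls of common radius
  rho = max of the circumscribing radii of their bounding boxes.\<close>
definition well_sep :: "real \<Rightarrow> (real^'d) set \<Rightarrow> (real^'d) set \<Rightarrow> bool" where
  "well_sep s A B =
     (let \<rho> = max (encl_rad A) (encl_rad B)
      in dist (bb_center A) (bb_center B) - 2 * \<rho> \<ge> s * \<rho>)"

fun ck_findpairs :: "real \<Rightarrow> (real^'d) stree \<Rightarrow> (real^'d) stree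
                      \<Rightarrow> ((real^'d) stree \<times> (real^'d) stree) list" where
  "ck_findpairs s v w =
     (if well_sep s (pts v) (pts w) then [(v, w)]
      else if Lmax (pts v) \<le> Lmax (pts w) then
        (case w of SLeaf _ \<Rightarrow> [(v, w)]
                 | SNode wl wr \<Rightarrow> ck_findpairs s v wl @ ck_findpairs s v wr)
      else
        (case v of SLeaf _ \<Rightarrow> [(v, w)]
                 | SNode vl vr \<Rightarrow> ck_findpairs s vl w @ ck_findpairs s vr w))"

text \<open>The WSPD W' of the leaf set of the tree: FindPairs on the two children of
  every internal node. Pairs are pairs of nodes v,w (representing S_v, S_w).\<close>
fun ck_wspd :: "real \<Rightarrow> (real^'d) stree \<Rightarrow> ((real^'d) stree \<times> (real^'d) stree) list" where
  "ck_wspd s (SLeaf p) = []"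
| "ck_wspd s (SNode l r) = ck_wspd s l @ ck_wspd s r @ ck_findpairs s l r"

text \<open>A ball is represented by (center, radius). rad gives the radius of the ball
  with a given center.\<close>
definition balls_of :: "(real^'d \<Rightarrow> real) \<Rightarrow> (real^'d) set \<Rightarrow> ((real^'d) \<times> real) set" where
  "balls_of rad X = (\<lambda>q. (q, rad q)) ` X"

text \<open>FindPairs(v,w) with S_v = {p}.  d(p, C_w) = |p cen| - radius(C_w).\<close>
fun findpairs_ball :: "real \<Rightarrow> ((real^'d) \<Rightarrow> real) \<Rightarrow> (real^'d) \<Rightarrow> (real^'d) stree
                       \<Rightarrow> (((real^'d) \<times> real) set \<times> ((real^'d) \<times> real) set) list" where
  "findpairs_ball s rad p w =
     (if (dist p (bb_center (pts w)) - encl_rad (pts w)) - rad p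
           \<ge> (3 * s + 4) * encl_rad (pts w)
      then [({(p, rad p)}, balls_of rad (pts w))]
      else (case w of SLeaf _ \<Rightarrow> [({(p, rad p)}, balls_of rad (pts w))]
                    | SNode wl wr \<Rightarrow> findpairs_ball s rad p wl @ findpairs_ball s rad p wr))"

fun process_pair :: "real \<Rightarrow> (real^'d \<Rightarrow> real) \<Rightarrow> (real^'d) stree \<times> (real^'d) stree
                     \<Rightarrow> (((real^'d) \<times> real) set \<times> ((real^'d) \<times> real) set) list" where
  "process_pair s rad (SLeaf p, SNode wl wr) = findpairs_ball s rad p (SNode wl wr)"
| "process_pair s rad (SNode vl vr, SLeaf q) = findpairs_ball s rad q (SNode vl vr)"
| "process_pair s rad (v, w) = [(balls_of rad (pts v), balls_of rad (pts w))]"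

text \<open>ComputeWSPD(D,s) for balls D_i = cball (c i) (r i), i < n, using split tree T
  of the centers. The output W is returned as a list of pairs (so its length
  counts the produced pairs).\<close>
definition compute_wspd :: "real \<Rightarrow> (nat \<Rightarrow> real^'d) \<Rightarrow> (nat \<Rightarrow> real) \<Rightarrow> nat
     \<Rightarrow> (real^'d) stree \<Rightarrow> (((real^'d) \<times> real) set \<times> ((real^'d) \<times> real) set) list" where
  "compute_wspd s c r n T =
     (let rad = (\<lambda>p. r (inv_into {..<n} c p))
      in concat (map (process_pair s rad) (ck_wspd (3 * s + 6) T)))"

end

theory Submission
  imports Defs "HOL-Library.FuncSet"
begin


fun subtrees :: "'a stree \<Rightarrow> 'a stree list" where
  "subtrees (SLeaf p) = [SLeaf p]"
| "subtrees (SNode l r) = SNode l r # subtrees l @ subtrees r"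

fun is_node :: "'a stree \<Rightarrow> bool" where
  "is_node (SLeaf p) = False"
| "is_node (SNode l r) = True"

lemma leaves_ne: "leaves t \<noteq> []"
  by (induction t) auto

lemma pts_ne: "pts t \<noteq> {}"
  using leaves_ne by (simp add: pts_def)

lemma finite_pts: "finite (pts t)"
  by (simp add: pts_def)

lemma pts_Node: "pts (SNode l r) = pts l \<union> pts r"
  by (simp add: pts_def)

lemma pts_Leaf: "pts (SLeaf p) = {p}"
  by (simp add: pts_def)

lemma self_subtree: "t \<in> set (subtrees t)"
  by (cases t) auto

lemma subtree_pts: "u \<in> set (subtrees t) \<Longrightarrow> pts u \<subseteq> pts t"
  by (induction t) (auto simp: pts_Node)

lemma subtree_trans: "u \<in> set (subtrees t) \<Longrightarrow> v \<in> set (subtrees u) \<Longrightarrow> v \<in> set (subtrees t)"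
  by (induction t) auto

lemma subtree_Node: "SNode l r \<in> set (subtrees t) \<Longrightarrow> l \<in> set (subtrees t) \<and> r \<in> set (subtrees t)"
proof -
  assume a: "SNode l r \<in> set (subtrees t)"
  have "l \<in> set (subtrees (SNode l r))" "r \<in> set (subtrees (SNode l r))"
    using self_subtree[of l] self_subtree[of r] by auto
  then show ?thesis using subtree_trans[OF a] by blast
qed

lemma distinct_sub: "distinct (leaves t) \<Longrightarrow> u \<in> set (subtrees t) \<Longrightarrow> distinct (leaves u)"
  by (induction t) auto

lemma size_sub: "u \<in> set (subtrees t) \<Longrightarrow> size u \<le> size t"
  by (induction t) auto

lemma distinct_subtrees: "distinct (leaves t) \<Longrightarrow> distinct (subtrees t)"
proof (induction t)
  case (SLeaf x)
  then show ?case by simp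
next
  case (SNode l r)
  have d: "pts l \<inter> pts r = {}" using SNode.prems by (simp add: pts_def)
  have "set (subtrees l) \<inter> set (subtrees r) = {}"
  proof (rule ccontr)
    assume "set (subtrees l) \<inter> set (subtrees r) \<noteq> {}"
    then obtain u where "u \<in> set (subtrees l)" "u \<in> set (subtrees r)" by blast
    then have "pts u \<subseteq> pts l" "pts u \<subseteq> pts r" using subtree_pts by auto
    then have "pts u \<subseteq> pts l \<inter> pts r" by simp
    then show False using d pts_ne[of u] by simp
  qed
  moreover have "SNode l r \<notin> set (subtrees l)"
  proof
    assume "SNode l r \<in> set (subtrees l)"
    from size_sub[OF this] show False by simp
  qed
  moreover have "SNode l r \<notin> set (subtrees r)"
  proof
    assume "SNode l r \<in> set (subtrees r)"
    from size_sub[OF this] show False by simp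
  qed
  moreover have "distinct (subtrees l)" "distinct (subtrees r)"
    using SNode.IH SNode.prems by auto
  ultimately show ?case by simp
qed

lemma length_subtrees: "length (subtrees t) + 1 = 2 * length (leaves t)"
  by (induction t) auto

lemma sub_disjoint:
  assumes "distinct (leaves (SNode l r))"
  shows "set (subtrees l) \<inter> set (subtrees r) = {}" "SNode l r \<notin> set (subtrees l)" "SNode l r \<notin> set (subtrees r)"
  using distinct_subtrees[OF assms] by auto

lemma pts_disjoint: "distinct (leaves (SNode l r)) \<Longrightarrow> pts l \<inter> pts r = {}"
  by (simp add: pts_def)

section \<open>Bounding boxes\<close>

lemma bb_lo_le: "finite X \<Longrightarrow> p \<in> X \<Longrightarrow> bb_lo X i \<le> p $ i"
  unfolding bb_lo_def by (simp add: Min_le)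

lemma bb_hi_ge: "finite X \<Longrightarrow> p \<in> X \<Longrightarrow> p $ i \<le> bb_hi X i"
  unfolding bb_hi_def by (simp add: Max_ge)

lemma bb_lo_ex: "finite X \<Longrightarrow> X \<noteq> {} \<Longrightarrow> \<exists>p\<in>X. p $ i = bb_lo X i"
proof -
  assume "finite X" "X \<noteq> {}"
  then have "Min ((\<lambda>p. p $ i) ` X) \<in> (\<lambda>p. p $ i) ` X" by (intro Min_in) auto
  then show ?thesis unfolding bb_lo_def by auto
qed

lemma bb_hi_ex: "finite X \<Longrightarrow> X \<noteq> {} \<Longrightarrow> \<exists>p\<in>X. p $ i = bb_hi X i"
proof -
  assume "finite X" "X \<noteq> {}"
  then have "Max ((\<lambda>p. p $ i) ` X) \<in> (\<lambda>p. p $ i) ` X" by (intro Max_in) auto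
  then show ?thesis unfolding bb_hi_def by auto
qed

lemma Lmax_ge: "bb_hi X i - bb_lo X i \<le> Lmax X"
  unfolding Lmax_def by (rule Max_ge) auto

lemma Lmax_ex: "\<exists>i. Lmax X = bb_hi X i - bb_lo X i"
proof -
  have "Lmax X \<in> range (\<lambda>i. bb_hi X i - bb_lo X i)"
    unfolding Lmax_def by (rule Max_in) auto
  then show ?thesis by auto
qed

lemma bb_lo_le_hi: "finite X \<Longrightarrow> X \<noteq> {} \<Longrightarrow> bb_lo X i \<le> bb_hi X i"
proof -
  assume a: "finite X" "X \<noteq> {}"
  then obtain p where "p \<in> X" by blast
  then show ?thesis using bb_lo_le[OF a(1), of p i] bb_hi_ge[OF a(1), of p i] by linarith
qed

lemma Lmax_nonneg: "finite X \<Longrightarrow> X \<noteq> {} \<Longrightarrow> 0 \<le> Lmax X"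
proof -
  assume "finite X" "X \<noteq> {}"
  then have "bb_lo X undefined \<le> bb_hi X undefined" by (rule bb_lo_le_hi)
  then show ?thesis using Lmax_ge[of X undefined] by linarith
qed

lemma bb_lo_mono: "finite Y \<Longrightarrow> X \<subseteq> Y \<Longrightarrow> X \<noteq> {} \<Longrightarrow> bb_lo Y i \<le> bb_lo X i"
proof -
  assume a: "finite Y" "X \<subseteq> Y" "X \<noteq> {}"
  from a(2,1) have "finite X" by (rule finite_subset)
  then obtain p where "p \<in> X" "p $ i = bb_lo X i" using bb_lo_ex[of X i] a by blast
  then show ?thesis using bb_lo_le[of Y p i] a by auto
qed

lemma bb_hi_mono: "finite Y \<Longrightarrow> X \<subseteq> Y \<Longrightarrow> X \<noteq> {} \<Longrightarrow> bb_hi X i \<le> bb_hi Y i"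
proof -
  assume a: "finite Y" "X \<subseteq> Y" "X \<noteq> {}"
  from a(2,1) have "finite X" by (rule finite_subset)
  then obtain p where "p \<in> X" "p $ i = bb_hi X i" using bb_hi_ex[of X i] a by blast
  then show ?thesis using bb_hi_ge[of Y p i] a by auto
qed

lemma Lmax_mono: "finite Y \<Longrightarrow> X \<subseteq> Y \<Longrightarrow> X \<noteq> {} \<Longrightarrow> Lmax X \<le> Lmax Y"
proof -
  assume a: "finite Y" "X \<subseteq> Y" "X \<noteq> {}"
  obtain i where "Lmax X = bb_hi X i - bb_lo X i" using Lmax_ex by blast
  also have "\<dots> \<le> bb_hi Y i - bb_lo Y i" using bb_lo_mono[OF a, of i] bb_hi_mono[OF a, of i] by linarith
  also have "\<dots> \<le> Lmax Y" by (rule Lmax_ge)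
  finally show ?thesis .
qed

lemma encl_rad_mono: "finite Y \<Longrightarrow> X \<subseteq> Y \<Longrightarrow> X \<noteq> {} \<Longrightarrow> encl_rad X \<le> encl_rad Y"
  unfolding encl_rad_def using Lmax_mono by (simp add: mult_left_mono)

lemma encl_rad_nonneg: "finite X \<Longrightarrow> X \<noteq> {} \<Longrightarrow> 0 \<le> encl_rad X"
  unfolding encl_rad_def by (simp add: Lmax_nonneg)

lemma norm_le_comp:
  fixes x :: "real^'d"
  assumes "\<And>i. \<bar>x $ i\<bar> \<le> b"
  shows "norm x \<le> sqrt (real CARD('d)) * b"
proof -
  have b: "0 \<le> b" using assms[of undefined] by linarith
  have "(\<Sum>i\<in>UNIV. (x $ i)\<^sup>2) \<le> (\<Sum>i\<in>(UNIV::'d set). b\<^sup>2)"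
  proof (rule sum_mono)
    fix i
    have "\<bar>x $ i\<bar>\<^sup>2 \<le> b\<^sup>2" by (rule power_mono) (use assms in auto)
    then show "(x $ i)\<^sup>2 \<le> b\<^sup>2" by simp
  qed
  then have "(norm x)\<^sup>2 \<le> real CARD('d) * b\<^sup>2"
    by (simp add: norm_vec_def L2_set_def sum_nonneg)
  then have "norm x \<le> sqrt (real CARD('d) * b\<^sup>2)"
    using real_le_rsqrt by blast
  then show ?thesis using b by (simp add: real_sqrt_mult)
qed

lemma norm_less_comp:
  fixes x :: "real^'d"
  assumes "\<And>i. \<bar>x $ i\<bar> < b"
  shows "norm x < sqrt (real CARD('d)) * b"
proof -
  have b: "0 < b" using assms[of undefined] by linarith
  have "(\<Sum>i\<in>UNIV. (x $ i)\<^sup>2) < (\<Sum>i\<in>(UNIV::'d set). b\<^sup>2)"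
  proof (rule sum_strict_mono)
    fix i
    have "\<bar>x $ i\<bar>\<^sup>2 < b\<^sup>2" by (rule power_strict_mono) (use assms in auto)
    then show "(x $ i)\<^sup>2 < b\<^sup>2" by simp
  qed auto
  then have "(norm x)\<^sup>2 < real CARD('d) * b\<^sup>2"
    by (simp add: norm_vec_def L2_set_def sum_nonneg)
  then have "norm x < sqrt (real CARD('d) * b\<^sup>2)"
    using real_less_rsqrt by blast
  then show ?thesis using b by (simp add: real_sqrt_mult)
qed

lemma dist_center_le:
  fixes X :: "(real^'d) set"
  assumes "\<And>i. bb_lo X i \<le> p $ i \<and> p $ i \<le> bb_hi X i"
  shows "dist p (bb_center X) \<le> encl_rad X"
proof -
  have "\<And>i. \<bar>(p - bb_center X) $ i\<bar> \<le> Lmax X / 2"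
  proof -
    fix i
    have "bb_hi X i - bb_lo X i \<le> Lmax X" by (rule Lmax_ge)
    moreover have "bb_lo X i \<le> p $ i" "p $ i \<le> bb_hi X i" using assms[of i] by auto
    ultimately have "p $ i - (bb_lo X i + bb_hi X i) / 2 \<le> Lmax X / 2 \<and> -(p $ i - (bb_lo X i + bb_hi X i) / 2) \<le> Lmax X / 2"
      by argo
    moreover have e: "(p - bb_center X) $ i = p $ i - (bb_lo X i + bb_hi X i) / 2"
      by (simp add: bb_center_def)
    ultimately show "\<bar>(p - bb_center X) $ i\<bar> \<le> Lmax X / 2"
      unfolding e abs_le_iff by blast
  qed
  from norm_le_comp[OF this] show ?thesis
    by (simp add: dist_norm encl_rad_def)
qed

lemma dist_center_pt: "finite X \<Longrightarrow> p \<in> X \<Longrightarrow> dist p (bb_center X) \<le> encl_rad X"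
  by (rule dist_center_le) (simp add: bb_lo_le bb_hi_ge)

lemma center_in_box: "finite X \<Longrightarrow> X \<noteq> {} \<Longrightarrow> bb_lo X i \<le> bb_center X $ i \<and> bb_center X $ i \<le> bb_hi X i"
  using bb_lo_le_hi[of X i] by (simp add: bb_center_def)

lemma dist_center_sub:
  "finite Y \<Longrightarrow> X \<subseteq> Y \<Longrightarrow> X \<noteq> {} \<Longrightarrow> dist (bb_center X) (bb_center Y) \<le> encl_rad Y"
proof -
  assume a: "finite Y" "X \<subseteq> Y" "X \<noteq> {}"
  from a(2,1) have f: "finite X" by (rule finite_subset)
  show ?thesis
  proof (rule dist_center_le)
    fix i
    show "bb_lo Y i \<le> bb_center X $ i \<and> bb_center X $ i \<le> bb_hi Y i"
      using center_in_box[OF f a(3), of i] bb_lo_mono[OF a, of i] bb_hi_mono[OF a, of i] by linarith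
  qed
qed

lemma single_bb: "bb_lo {p} i = p $ i" "bb_hi {p} i = p $ i"
  by (simp_all add: bb_lo_def bb_hi_def)

lemma single_Lmax: "Lmax {p} = 0"
  by (simp add: Lmax_def single_bb)

lemma single_center: "bb_center {p} = p"
  by (simp add: bb_center_def single_bb vec_eq_iff)

lemma single_encl: "encl_rad {p} = 0"
  by (simp add: encl_rad_def single_Lmax)

lemma Lmax_pos:
  assumes "finite X" "p \<in> X" "q \<in> X" "p \<noteq> q"
  shows "0 < Lmax X"
proof -
  obtain i where "p $ i \<noteq> q $ i" using assms(4) by (auto simp: vec_eq_iff)
  moreover have "bb_lo X i \<le> p $ i" "p $ i \<le> bb_hi X i" "bb_lo X i \<le> q $ i" "q $ i \<le> bb_hi X i"
    using assms bb_lo_le bb_hi_ge by auto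
  ultimately have "0 < bb_hi X i - bb_lo X i" by linarith
  then show ?thesis using Lmax_ge[of X i] by linarith
qed

lemma node_Lmax_pos:
  fixes l r :: "(real^'d) stree"
  assumes "distinct (leaves (SNode l r))"
  shows "0 < Lmax (pts (SNode l r))"
proof -
  obtain p where "p \<in> pts l" using pts_ne[of l] by blast
  moreover obtain q where "q \<in> pts r" using pts_ne[of r] by blast
  moreover have "p \<noteq> q" using pts_disjoint[OF assms] calculation by auto
  ultimately show ?thesis using Lmax_pos[of "pts (SNode l r)" p q] finite_pts by (auto simp: pts_Node)
qed

lemma card_pos: "0 < real CARD('d::finite)"
  by simp

lemma node_encl_pos:
  fixes l r :: "(real^'d) stree"
  assumes "distinct (leaves (SNode l r))"
  shows "0 < encl_rad (pts (SNode l r))"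
  using node_Lmax_pos[OF assms] by (simp add: encl_rad_def)

lemma well_sep_sym: "well_sep s A B = well_sep s B A"
  by (simp add: well_sep_def Let_def dist_commute max.commute)



declare ck_findpairs.simps[simp del] findpairs_ball.simps[simp del]

definition cnt :: "('a stree \<times> 'a stree) list \<Rightarrow> 'a \<Rightarrow> 'a \<Rightarrow> nat" where
  "cnt L p q = length (filter (\<lambda>(x,y). p \<in> pts x \<and> q \<in> pts y) L)"

lemma cnt_append: "cnt (L1 @ L2) p q = cnt L1 p q + cnt L2 p q"
  by (simp add: cnt_def)

lemma fp_cnt:
  "distinct (leaves v) \<Longrightarrow> distinct (leaves w) \<Longrightarrow>
   cnt (ck_findpairs s v w) p q = (if p \<in> pts v \<and> q \<in> pts w then 1 else 0)"
proof (induction s v w rule: ck_findpairs.induct)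
  case (1 s v w)
  show ?case
  proof (cases "well_sep s (pts v) (pts w)")
    case True
    then have "ck_findpairs s v w = [(v,w)]" by (subst ck_findpairs.simps) simp
    then show ?thesis by (simp add: cnt_def)
  next
    case nws: False
    show ?thesis
    proof (cases "Lmax (pts v) \<le> Lmax (pts w)")
      case le: True
      show ?thesis
      proof (cases w)
        case (SLeaf x)
        then have "ck_findpairs s v w = [(v,w)]" using nws le by (subst ck_findpairs.simps) simp
        then show ?thesis by (simp add: cnt_def)
      next
        case (SNode wl wr)
        then have eq: "ck_findpairs s v w = ck_findpairs s v wl @ ck_findpairs s v wr"
          using nws le by (subst ck_findpairs.simps) simp
        have d: "pts wl \<inter> pts wr = {}" using "1.prems" SNode pts_disjoint by blast
        have "cnt (ck_findpairs s v wl) p q = (if p \<in> pts v \<and> q \<in> pts wl then 1 else 0)"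
          using "1.IH"(1)[OF nws le SNode] "1.prems" SNode by simp
        moreover have "cnt (ck_findpairs s v wr) p q = (if p \<in> pts v \<and> q \<in> pts wr then 1 else 0)"
          using "1.IH"(2)[OF nws le SNode] "1.prems" SNode by simp
        ultimately show ?thesis using eq d SNode by (auto simp: cnt_append pts_Node)
      qed
    next
      case gt: False
      show ?thesis
      proof (cases v)
        case (SLeaf x)
        then have "ck_findpairs s v w = [(v,w)]" using nws gt by (subst ck_findpairs.simps) simp
        then show ?thesis by (simp add: cnt_def)
      next
        case (SNode vl vr)
        then have eq: "ck_findpairs s v w = ck_findpairs s vl w @ ck_findpairs s vr w"
          using nws gt by (subst ck_findpairs.simps) simp
        have d: "pts vl \<inter> pts vr = {}" using "1.prems" SNode pts_disjoint by blast
        have "cnt (ck_findpairs s vl w) p q = (if p \<in> pts vl \<and> q \<in> pts w then 1 else 0)"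
          using "1.IH"(3)[OF nws gt SNode] "1.prems" SNode by simp
        moreover have "cnt (ck_findpairs s vr w) p q = (if p \<in> pts vr \<and> q \<in> pts w then 1 else 0)"
          using "1.IH"(4)[OF nws gt SNode] "1.prems" SNode by simp
        ultimately show ?thesis using eq d SNode by (auto simp: cnt_append pts_Node)
      qed
    qed
  qed
qed

lemma wspd_cnt:
  "distinct (leaves T) \<Longrightarrow>
   cnt (ck_wspd s T) p q + cnt (ck_wspd s T) q p = (if p \<in> pts T \<and> q \<in> pts T \<and> p \<noteq> q then 1 else 0)"
proof (induction T)
  case (SLeaf x)
  then show ?case by (simp add: cnt_def pts_Leaf)
next
  case (SNode l r)
  have d: "pts l \<inter> pts r = {}" using SNode.prems pts_disjoint by blast
  have dl: "distinct (leaves l)" and dr: "distinct (leaves r)" using SNode.prems by auto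
  have "cnt (ck_wspd s (SNode l r)) p q + cnt (ck_wspd s (SNode l r)) q p =
     (cnt (ck_wspd s l) p q + cnt (ck_wspd s l) q p) + (cnt (ck_wspd s r) p q + cnt (ck_wspd s r) q p)
     + (cnt (ck_findpairs s l r) p q + cnt (ck_findpairs s l r) q p)"
    by (simp add: cnt_append)
  also have "\<dots> = (if p \<in> pts l \<and> q \<in> pts l \<and> p \<noteq> q then 1 else 0) + (if p \<in> pts r \<and> q \<in> pts r \<and> p \<noteq> q then 1 else 0)
     + ((if p \<in> pts l \<and> q \<in> pts r then 1 else 0) + (if q \<in> pts l \<and> p \<in> pts r then 1 else 0))"
    using SNode.IH dl dr fp_cnt[OF dl dr] by simp
  also have "\<dots> = (if p \<in> pts (SNode l r) \<and> q \<in> pts (SNode l r) \<and> p \<noteq> q then 1 else 0)"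
    using d by (auto simp: pts_Node)
  finally show ?case .
qed

lemma cnt_le1: "distinct (leaves T) \<Longrightarrow> cnt (ck_wspd s T) p q \<le> 1"
  using wspd_cnt[of T s p q] by (auto split: if_splits)

lemma cnt_ge:
  assumes "e \<in> set L" "p \<in> pts (fst e)" "q \<in> pts (snd e)"
  shows "1 \<le> cnt L p q"
proof -
  have "e \<in> set (filter (\<lambda>(x,y). p \<in> pts x \<and> q \<in> pts y) L)" using assms by (cases e) auto
  then have "0 < length (filter (\<lambda>(x,y). p \<in> pts x \<and> q \<in> pts y) L)" by (rule length_pos_if_in_set)
  then show ?thesis unfolding cnt_def by (simp add: Suc_le_eq)
qed

lemma cnt_ge2:
  assumes "e1 \<in> set L" "e2 \<in> set L" "e1 \<noteq> e2"
    "p \<in> pts (fst e1)" "q \<in> pts (snd e1)" "p \<in> pts (fst e2)" "q \<in> pts (snd e2)"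
  shows "2 \<le> cnt L p q"
proof -
  let ?F = "filter (\<lambda>(x,y). p \<in> pts x \<and> q \<in> pts y) L"
  have "{e1, e2} \<subseteq> set ?F" using assms by (cases e1, cases e2) auto
  then have "card {e1, e2} \<le> card (set ?F)" by (intro card_mono) auto
  also have "\<dots> \<le> length ?F" by (rule card_length)
  finally show ?thesis using assms(3) by (simp add: cnt_def)
qed

lemma wspd_uniq:
  assumes "distinct (leaves T)" "e1 \<in> set (ck_wspd s T)" "e2 \<in> set (ck_wspd s T)"
    "p \<in> pts (fst e1)" "q \<in> pts (snd e1)" "p \<in> pts (fst e2)" "q \<in> pts (snd e2)"
  shows "e1 = e2"
  using cnt_ge2[OF assms(2,3) _ assms(4-7)] cnt_le1[OF assms(1), of s p q] by linarith

lemma wspd_disj: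
  assumes "distinct (leaves T)" "(x,y) \<in> set (ck_wspd s T)"
  shows "pts x \<inter> pts y = {}"
proof (rule ccontr)
  assume "pts x \<inter> pts y \<noteq> {}"
  then obtain p where "p \<in> pts x" "p \<in> pts y" by blast
  then have "1 \<le> cnt (ck_wspd s T) p p" using cnt_ge[OF assms(2)] by simp
  then show False using wspd_cnt[OF assms(1), of s p p] by simp
qed

lemma wspd_distinct:
  assumes "distinct (leaves T)"
  shows "distinct (ck_wspd s T)"
proof (rule ccontr)
  assume "\<not> distinct (ck_wspd s T)"
  then obtain xs e ys zs where L: "ck_wspd s T = xs @ [e] @ ys @ [e] @ zs"
    using not_distinct_decomp by blast
  obtain x y where e: "e = (x,y)" by (cases e)
  obtain p where p: "p \<in> pts x" using pts_ne[of x] by blast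
  obtain q where q: "q \<in> pts y" using pts_ne[of y] by blast
  have "2 \<le> cnt (ck_wspd s T) p q" unfolding L using p q e by (simp add: cnt_def)
  then show False using cnt_le1[OF assms, of s p q] by linarith
qed



definition child :: "'a stree \<Rightarrow> 'a stree \<Rightarrow> bool" where
  "child x P \<longleftrightarrow> (\<exists>r. P = SNode x r) \<or> (\<exists>l. P = SNode l x)"

lemma child_sub: "child x P \<Longrightarrow> P \<in> set (subtrees t) \<Longrightarrow> x \<in> set (subtrees t)"
  unfolding child_def using subtree_Node by blast

lemma child_pts: "child x P \<Longrightarrow> pts x \<subseteq> pts P"
  unfolding child_def by (auto simp: pts_Node)

lemma Lmax_child: "child x P \<Longrightarrow> Lmax (pts x) \<le> Lmax (pts P)"
proof -
  assume "child x P"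
  then have "pts x \<subseteq> pts P" by (rule child_pts)
  then show ?thesis by (rule Lmax_mono[OF finite_pts _ pts_ne])
qed

definition Gc :: "real \<Rightarrow> (real^'d) stree set \<Rightarrow> (real^'d) stree \<Rightarrow> (real^'d) stree \<Rightarrow> (real^'d) stree \<Rightarrow> bool" where
  "Gc s ST P x y \<longleftrightarrow> child y P \<and> P \<in> ST \<and> \<not> well_sep s (pts x) (pts P) \<and> Lmax (pts x) \<le> Lmax (pts P)
      \<and> (\<exists>Px\<in>ST. child x Px \<and> Lmax (pts P) \<le> Lmax (pts Px))"

lemma classify:
  fixes ST :: "(real^'d) stree set"
  assumes closed: "\<And>l r. SNode l r \<in> ST \<Longrightarrow> l \<in> ST \<and> r \<in> ST"
  shows "v \<in> ST \<Longrightarrow> w \<in> ST \<Longrightarrow> Pv \<in> ST \<Longrightarrow> child v Pv \<Longrightarrow> Lmax (pts w) \<le> Lmax (pts Pv)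
    \<Longrightarrow> Pw \<in> ST \<Longrightarrow> child w Pw \<Longrightarrow> Lmax (pts v) \<le> Lmax (pts Pw)
    \<Longrightarrow> e \<in> set (ck_findpairs s v w)
    \<Longrightarrow> e = (v,w) \<or> (\<exists>P. Gc s ST P (fst e) (snd e)) \<or> (\<exists>P. Gc s ST P (snd e) (fst e))"
proof (induction s v w arbitrary: Pv Pw e rule: ck_findpairs.induct)
  case (1 s v w)
  show ?case
  proof (cases "well_sep s (pts v) (pts w)")
    case True
    then have "ck_findpairs s v w = [(v,w)]" by (subst ck_findpairs.simps) simp
    then show ?thesis using "1.prems" by simp
  next
    case nws: False
    show ?thesis
    proof (cases "Lmax (pts v) \<le> Lmax (pts w)")
      case le: True
      show ?thesis
      proof (cases w)
        case (SLeaf x)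
        then have "ck_findpairs s v w = [(v,w)]" using nws le by (subst ck_findpairs.simps) simp
        then show ?thesis using "1.prems" by simp
      next
        case (SNode wl wr)
        then have eq: "ck_findpairs s v w = ck_findpairs s v wl @ ck_findpairs s v wr"
          using nws le by (subst ck_findpairs.simps) simp
        have cl: "child wl w" "child wr w" using SNode by (auto simp: child_def)
        have st: "wl \<in> ST" "wr \<in> ST" using closed[of wl wr] "1.prems"(2) SNode by simp_all
        have lm: "Lmax (pts wl) \<le> Lmax (pts Pv)" "Lmax (pts wr) \<le> Lmax (pts Pv)"
          using Lmax_child[OF cl(1)] Lmax_child[OF cl(2)] "1.prems"(5) by linarith+
        have G: "Gc s ST w v wl" "Gc s ST w v wr"
          unfolding Gc_def using cl "1.prems"(2,3,4,5) nws le by blast+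
        from "1.prems"(9) eq consider "e \<in> set (ck_findpairs s v wl)" | "e \<in> set (ck_findpairs s v wr)" by auto
        then show ?thesis
        proof cases
          case 1
          from "1.IH"(1)[OF nws le SNode "1.prems"(1) st(1) "1.prems"(3,4) lm(1) "1.prems"(2) cl(1) le 1]
          consider "e = (v, wl)" | "(\<exists>P. Gc s ST P (fst e) (snd e)) \<or> (\<exists>P. Gc s ST P (snd e) (fst e))" by blast
          then show ?thesis
          proof cases
            case 1
            then have "Gc s ST w (fst e) (snd e)" using G(1) by simp
            then show ?thesis by blast
          qed blast
        next
          case 2
          from "1.IH"(2)[OF nws le SNode "1.prems"(1) st(2) "1.prems"(3,4) lm(2) "1.prems"(2) cl(2) le 2]
          consider "e = (v, wr)" | "(\<exists>P. Gc s ST P (fst e) (snd e)) \<or> (\<exists>P. Gc s ST P (snd e) (fst e))" by blast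
          then show ?thesis
          proof cases
            case 1
            then have "Gc s ST w (fst e) (snd e)" using G(2) by simp
            then show ?thesis by blast
          qed blast
        qed
      qed
    next
      case gt: False
      show ?thesis
      proof (cases v)
        case (SLeaf x)
        then have "ck_findpairs s v w = [(v,w)]" using nws gt by (subst ck_findpairs.simps) simp
        then show ?thesis using "1.prems" by simp
      next
        case (SNode vl vr)
        then have eq: "ck_findpairs s v w = ck_findpairs s vl w @ ck_findpairs s vr w"
          using nws gt by (subst ck_findpairs.simps) simp
        have cl: "child vl v" "child vr v" using SNode by (auto simp: child_def)
        have st: "vl \<in> ST" "vr \<in> ST" using closed[of vl vr] "1.prems"(1) SNode by simp_all
        have lm: "Lmax (pts vl) \<le> Lmax (pts Pw)" "Lmax (pts vr) \<le> Lmax (pts Pw)"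
          using Lmax_child[OF cl(1)] Lmax_child[OF cl(2)] "1.prems"(8) by linarith+
        have lw: "Lmax (pts w) \<le> Lmax (pts v)" using gt by linarith
        have nws': "\<not> well_sep s (pts w) (pts v)" using nws by (simp add: well_sep_sym)
        have G: "Gc s ST v w vl" "Gc s ST v w vr"
          unfolding Gc_def using cl "1.prems"(1,6,7,8) nws' lw by blast+
        from "1.prems"(9) eq consider "e \<in> set (ck_findpairs s vl w)" | "e \<in> set (ck_findpairs s vr w)" by auto
        then show ?thesis
        proof cases
          case 1
          from "1.IH"(3)[OF nws gt SNode st(1) "1.prems"(2) "1.prems"(1) cl(1) lw "1.prems"(6,7) lm(1) 1]
          consider "e = (vl, w)" | "(\<exists>P. Gc s ST P (fst e) (snd e)) \<or> (\<exists>P. Gc s ST P (snd e) (fst e))" by blast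
          then show ?thesis
          proof cases
            case 1
            then have "Gc s ST v (snd e) (fst e)" using G(1) by simp
            then show ?thesis by blast
          qed blast
        next
          case 2
          from "1.IH"(4)[OF nws gt SNode st(2) "1.prems"(2) "1.prems"(1) cl(2) lw "1.prems"(6,7) lm(2) 2]
          consider "e = (vr, w)" | "(\<exists>P. Gc s ST P (fst e) (snd e)) \<or> (\<exists>P. Gc s ST P (snd e) (fst e))" by blast
          then show ?thesis
          proof cases
            case 1
            then have "Gc s ST v (snd e) (fst e)" using G(2) by simp
            then show ?thesis by blast
          qed blast
        qed
      qed
    qed
  qed
qed

lemma wspd_classify:
  fixes T :: "(real^'d) stree"
  shows "T' \<in> set (subtrees T) \<Longrightarrow> e \<in> set (ck_wspd s T') \<Longrightarrow>
    (\<exists>l r. SNode l r \<in> set (subtrees T) \<and> e = (l,r)) \<or>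
    (\<exists>P. Gc s (set (subtrees T)) P (fst e) (snd e)) \<or> (\<exists>P. Gc s (set (subtrees T)) P (snd e) (fst e))"
proof (induction T')
  case (SLeaf x)
  then show ?case by simp
next
  case (SNode l r)
  have st: "l \<in> set (subtrees T)" "r \<in> set (subtrees T)" using subtree_Node[OF SNode.prems(1)] by auto
  have cl: "child l (SNode l r)" "child r (SNode l r)" by (auto simp: child_def)
  have lm: "Lmax (pts l) \<le> Lmax (pts (SNode l r))" "Lmax (pts r) \<le> Lmax (pts (SNode l r))"
    using Lmax_child cl by auto
  from SNode.prems(2) consider "e \<in> set (ck_wspd s l)" | "e \<in> set (ck_wspd s r)" | "e \<in> set (ck_findpairs s l r)"
    by auto
  then show ?case
  proof cases
    case 1 then show ?thesis using SNode.IH(1) st by blast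
  next
    case 2 then show ?thesis using SNode.IH(2) st by blast
  next
    case 3
    have "e = (l,r) \<or> (\<exists>P. Gc s (set (subtrees T)) P (fst e) (snd e)) \<or> (\<exists>P. Gc s (set (subtrees T)) P (snd e) (fst e))"
      by (rule classify[OF _ st(1) st(2) SNode.prems(1) cl(1) lm(2) SNode.prems(1) cl(2) lm(1) 3])
        (use subtree_Node in blast)
    then show ?thesis using SNode.prems(1) by blast
  qed
qed

section \<open>Cells\<close>

definition inbox :: "('d \<Rightarrow> real) \<times> ('d \<Rightarrow> real) \<Rightarrow> real^'d \<Rightarrow> bool" where
  "inbox B p \<longleftrightarrow> (\<forall>i. fst B i \<le> p $ i \<and> p $ i \<le> snd B i)"

definition strict :: "('d \<Rightarrow> real) \<times> ('d \<Rightarrow> real) \<Rightarrow> ('d \<Rightarrow> real) \<Rightarrow> bool" where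
  "strict B g \<longleftrightarrow> (\<forall>i. fst B i < g i \<and> g i < snd B i)"

definition sides :: "('d \<Rightarrow> real) \<times> ('d \<Rightarrow> real) \<Rightarrow> real \<Rightarrow> bool" where
  "sides B a \<longleftrightarrow> (\<forall>i. a \<le> snd B i - fst B i)"

lemma halfsplit:
  fixes S A B :: "(real^'d) set"
  assumes inQ: "\<forall>p\<in>S. inbox Q p" and sQ: "sides Q (L/2)" and fin: "finite S" "S \<noteq> {}"
    and iL: "bb_hi S i - bb_lo S i = L"
    and m: "m = (bb_lo S i + bb_hi S i) / 2"
    and A: "\<forall>p\<in>A. p $ i \<le> m" and B: "\<forall>p\<in>B. m \<le> p $ i" and AS: "A \<subseteq> S" and BS: "B \<subseteq> S"
  shows "\<exists>QA QB. (\<forall>p\<in>A. inbox QA p) \<and> (\<forall>p\<in>B. inbox QB p) \<and> sides QA (L/2) \<and> sides QB (L/2)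
     \<and> (\<forall>g. strict QA g \<longrightarrow> strict Q g) \<and> (\<forall>g. strict QB g \<longrightarrow> strict Q g)
     \<and> (\<forall>g. \<not> (strict QA g \<and> strict QB g))"
proof -
  obtain plo where plo: "plo \<in> S" "plo $ i = bb_lo S i" using bb_lo_ex[OF fin] by blast
  obtain phi where phi: "phi \<in> S" "phi $ i = bb_hi S i" using bb_hi_ex[OF fin] by blast
  have "inbox Q plo" using inQ plo(1) by blast
  then have "fst Q i \<le> plo $ i" unfolding inbox_def by blast
  then have lo: "fst Q i \<le> bb_lo S i" using plo(2) by simp
  have "inbox Q phi" using inQ phi(1) by blast
  then have "phi $ i \<le> snd Q i" unfolding inbox_def by blast
  then have hi: "bb_hi S i \<le> snd Q i" using phi(2) by simp
  have lh: "bb_lo S i \<le> bb_hi S i" by (rule bb_lo_le_hi[OF fin])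
  have mh: "m \<le> snd Q i" using lh hi m by argo
  have ml: "fst Q i \<le> m" using lh lo m by argo
  have ml2: "L / 2 \<le> m - fst Q i" using lo iL m by argo
  have mh2: "L / 2 \<le> snd Q i - m" using hi iL m by argo
  define QA where "QA = (fst Q, (snd Q)(i := m))"
  define QB where "QB = ((fst Q)(i := m), snd Q)"
  have 1: "\<forall>p\<in>A. inbox QA p" using A AS inQ unfolding QA_def inbox_def by auto
  have 2: "\<forall>p\<in>B. inbox QB p" using B BS inQ unfolding QB_def inbox_def by auto
  have 3: "sides QA (L/2)" using sQ ml2 unfolding QA_def sides_def by auto
  have 4: "sides QB (L/2)" using sQ mh2 unfolding QB_def sides_def by auto
  have 5: "\<forall>g. strict QA g \<longrightarrow> strict Q g"
  proof (intro allI impI)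
    fix g assume a: "strict QA g"
    show "strict Q g" unfolding strict_def
    proof
      fix j
      show "fst Q j < g j \<and> g j < snd Q j"
      proof (cases "j = i")
        case True
        from a have "fst QA i < g i \<and> g i < snd QA i" unfolding strict_def by blast
        then show ?thesis using True mh unfolding QA_def by auto
      next
        case False
        from a have "fst QA j < g j \<and> g j < snd QA j" unfolding strict_def by blast
        then show ?thesis using False unfolding QA_def by auto
      qed
    qed
  qed
  have 6: "\<forall>g. strict QB g \<longrightarrow> strict Q g"
  proof (intro allI impI)
    fix g assume a: "strict QB g"
    show "strict Q g" unfolding strict_def
    proof
      fix j
      show "fst Q j < g j \<and> g j < snd Q j"
      proof (cases "j = i")
        case True
        from a have "fst QB i < g i \<and> g i < snd QB i" unfolding strict_def by blast
        then show ?thesis using True ml unfolding QB_def by auto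
      next
        case False
        from a have "fst QB j < g j \<and> g j < snd QB j" unfolding strict_def by blast
        then show ?thesis using False unfolding QB_def by auto
      qed
    qed
  qed
  have 7: "\<forall>g. \<not> (strict QA g \<and> strict QB g)"
  proof (intro allI notI)
    fix g assume "strict QA g \<and> strict QB g"
    then have "g i < m" "m < g i" unfolding strict_def QA_def QB_def by (metis fst_conv snd_conv fun_upd_same)+
    then show False by simp
  qed
  show ?thesis using 1 2 3 4 5 6 7 by blast
qed



lemma packing:
  fixes A :: "'a set" and lo hi :: "'a \<Rightarrow> 'd::finite \<Rightarrow> real" and x :: "'a \<Rightarrow> real^'d" and z :: "real^'d"
  assumes dpos: "0 < \<delta>" and c: "0 \<le> c"
    and side: "\<forall>a\<in>A. \<forall>i. \<delta> \<le> hi a i - lo a i"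
    and inb: "\<forall>a\<in>A. \<forall>i. lo a i \<le> x a $ i \<and> x a $ i \<le> hi a i"
    and near: "\<forall>a\<in>A. \<forall>i. \<bar>x a $ i - z $ i\<bar> \<le> c * \<delta>"
    and disj: "\<forall>a\<in>A. \<forall>b\<in>A. a \<noteq> b \<longrightarrow> \<not> (\<exists>g. \<forall>i. lo a i < g i \<and> g i < hi a i \<and> lo b i < g i \<and> g i < hi b i)"
  shows "finite A \<and> real (card A) \<le> (4*c+5) ^ CARD('d)"
proof -
  define h where "h = \<delta> / 2"
  have hpos: "0 < h" using dpos by (simp add: h_def)
  define t where "t a i = min (x a $ i) (hi a i - \<delta>)" for a i
  define k where "k a i = \<lfloor>t a i / h\<rfloor> + 1" for a i
  have kb: "t a i < of_int (k a i) * h \<and> of_int (k a i) * h \<le> t a i + h" for a i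
  proof -
    have "t a i / h - 1 < of_int \<lfloor>t a i / h\<rfloor>" "of_int \<lfloor>t a i / h\<rfloor> \<le> t a i / h"
      by linarith+
    then have "t a i / h < of_int (k a i)" "of_int (k a i) \<le> t a i / h + 1"
      unfolding k_def by simp_all
    then show ?thesis using hpos by (simp add: field_simps)
  qed
  have kin: "lo a i < of_int (k a i) * h \<and> of_int (k a i) * h < hi a i
      \<and> x a $ i - \<delta> < of_int (k a i) * h \<and> of_int (k a i) * h \<le> x a $ i + h"
    if "a \<in> A" for a i
  proof -
    have "lo a i \<le> x a $ i" "x a $ i \<le> hi a i" "\<delta> \<le> hi a i - lo a i"
      using inb side that by auto
    then have "lo a i \<le> t a i" "t a i \<le> x a $ i" "x a $ i - \<delta> \<le> t a i" "t a i \<le> hi a i - \<delta>"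
      unfolding t_def using dpos by auto
    moreover have "\<delta> = 2 * h" by (simp add: h_def)
    ultimately show ?thesis using kb[of a i] hpos by argo
  qed
  have inj: "inj_on k A"
  proof (rule inj_onI)
    fix a b assume ab: "a \<in> A" "b \<in> A" "k a = k b"
    show "a = b"
    proof (rule ccontr)
      assume "a \<noteq> b"
      then have "\<not> (\<exists>g. \<forall>i. lo a i < g i \<and> g i < hi a i \<and> lo b i < g i \<and> g i < hi b i)"
        using disj ab by blast
      moreover have "\<forall>i. lo a i < of_int (k a i) * h \<and> of_int (k a i) * h < hi a i
          \<and> lo b i < of_int (k a i) * h \<and> of_int (k a i) * h < hi b i"
        using kin[OF ab(1)] kin[OF ab(2)] ab(3) by metis
      then have "\<exists>g. \<forall>i. lo a i < g i \<and> g i < hi a i \<and> lo b i < g i \<and> g i < hi b i"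
        by (intro exI[of _ "\<lambda>i. of_int (k a i) * h"]) simp
      ultimately show False by blast
    qed
  qed
  define S where "S i = {\<lceil>(z $ i - c * \<delta> - \<delta>) / h\<rceil> .. \<lfloor>(z $ i + c * \<delta> + h) / h\<rfloor>}" for i
  have kS: "k ` A \<subseteq> Pi\<^sub>E UNIV S"
  proof
    fix f assume "f \<in> k ` A"
    then obtain a where a: "a \<in> A" "f = k a" by blast
    have "f i \<in> S i" for i
    proof -
      have 1: "\<bar>x a $ i - z $ i\<bar> \<le> c * \<delta>" using near a by auto
      have 2: "x a $ i - \<delta> < of_int (k a i) * h" "of_int (k a i) * h \<le> x a $ i + h" using kin[OF a(1)] by auto
      have "z $ i - c * \<delta> - \<delta> \<le> of_int (k a i) * h" using 1 2 by (simp add: abs_le_iff; argo)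
      then have 3: "(z $ i - c * \<delta> - \<delta>) / h \<le> of_int (k a i)" using hpos by (simp add: field_simps)
      have "of_int (k a i) * h \<le> z $ i + c * \<delta> + h" using 1 2 by (simp add: abs_le_iff; argo)
      then have 4: "of_int (k a i) \<le> (z $ i + c * \<delta> + h) / h" using hpos by (simp add: field_simps)
      show ?thesis unfolding S_def a(2) using 3 4 by (simp add: ceiling_le_iff le_floor_iff)
    qed
    then show "f \<in> Pi\<^sub>E UNIV S" by (simp add: PiE_UNIV_domain)
  qed
  have finS: "finite (Pi\<^sub>E UNIV S)" by (rule finite_PiE) (auto simp: S_def)
  have finA: "finite A" using finite_imageD[OF finite_subset[OF kS finS] inj] .
  have "card A \<le> card (Pi\<^sub>E UNIV S)" using card_inj_on_le[OF inj kS finS] .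
  also have "\<dots> = (\<Prod>i\<in>UNIV. card (S i))" by (simp add: card_PiE)
  finally have cA: "real (card A) \<le> (\<Prod>i\<in>UNIV. real (card (S i)))" by (metis of_nat_le_iff of_nat_prod)
  have Sb: "real (card (S i)) \<le> 4 * c + 5" for i
  proof -
    let ?a = "(z $ i - c * \<delta> - \<delta>) / h" and ?b = "(z $ i + c * \<delta> + h) / h"
    have ba: "?b - ?a = 4 * c + 3" using hpos unfolding h_def by (simp add: field_simps)
    have "real (card (S i)) = real (nat (\<lfloor>?b\<rfloor> - \<lceil>?a\<rceil> + 1))" by (simp add: S_def)
    also have "\<dots> \<le> 4 * c + 5"
    proof (cases "\<lfloor>?b\<rfloor> - \<lceil>?a\<rceil> + 1 \<ge> 0")
      case True
      then have "real (nat (\<lfloor>?b\<rfloor> - \<lceil>?a\<rceil> + 1)) = of_int \<lfloor>?b\<rfloor> - of_int \<lceil>?a\<rceil> + 1" by simp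
      also have "\<dots> \<le> ?b - ?a + 1" using of_int_floor_le[of ?b] le_of_int_ceiling[of ?a] by argo
      finally show ?thesis using ba by linarith
    next
      case False
      then show ?thesis using c by simp
    qed
    finally show ?thesis .
  qed
  have "(\<Prod>i\<in>UNIV. real (card (S i))) \<le> (4*c+5) ^ CARD('d)"
    by (rule prod_le_power) (use Sb c in auto)
  then show ?thesis using cA finA by linarith
qed



lemma sides_mono: "sides Q a \<Longrightarrow> b \<le> a \<Longrightarrow> sides Q b"
  unfolding sides_def using order_trans by blast

lemma split_cells:
  fixes l r :: "(real^'d) stree"
  assumes st: "split_tree (SNode l r)" and inQ: "\<forall>p\<in>pts (SNode l r). inbox Q p"
    and sQ: "sides Q (Lmax (pts (SNode l r)) / 2)"
  shows "\<exists>Ql Qr. (\<forall>p\<in>pts l. inbox Ql p) \<and> (\<forall>p\<in>pts r. inbox Qr p)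
     \<and> sides Ql (Lmax (pts (SNode l r)) / 2) \<and> sides Qr (Lmax (pts (SNode l r)) / 2)
     \<and> (\<forall>g. strict Ql g \<longrightarrow> strict Q g) \<and> (\<forall>g. strict Qr g \<longrightarrow> strict Q g)
     \<and> (\<forall>g. \<not> (strict Ql g \<and> strict Qr g))"
proof -
  define S where "S = pts (SNode l r)"
  define L where "L = Lmax S"
  have fin: "finite S" "S \<noteq> {}" unfolding S_def using finite_pts pts_ne by auto
  have sub: "pts l \<subseteq> S" "pts r \<subseteq> S" unfolding S_def by (auto simp: pts_Node)
  from st obtain i where iL: "bb_hi S i - bb_lo S i = L"
    and or: "((\<forall>p\<in>pts l. p $ i \<le> (bb_lo S i + bb_hi S i) / 2) \<and> (\<forall>p\<in>pts r. (bb_lo S i + bb_hi S i) / 2 \<le> p $ i)) \<or>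
             ((\<forall>p\<in>pts r. p $ i \<le> (bb_lo S i + bb_hi S i) / 2) \<and> (\<forall>p\<in>pts l. (bb_lo S i + bb_hi S i) / 2 \<le> p $ i))"
    unfolding S_def L_def by (auto simp: Let_def)
  have inQ': "\<forall>p\<in>S. inbox Q p" and sQ': "sides Q (L/2)" using inQ sQ unfolding S_def L_def by auto
  from or show ?thesis
  proof
    assume a: "(\<forall>p\<in>pts l. p $ i \<le> (bb_lo S i + bb_hi S i) / 2) \<and> (\<forall>p\<in>pts r. (bb_lo S i + bb_hi S i) / 2 \<le> p $ i)"
    from halfsplit[OF inQ' sQ' fin iL refl _ _ sub(1) sub(2)] a
    show ?thesis unfolding L_def S_def by blast
  next
    assume a: "(\<forall>p\<in>pts r. p $ i \<le> (bb_lo S i + bb_hi S i) / 2) \<and> (\<forall>p\<in>pts l. (bb_lo S i + bb_hi S i) / 2 \<le> p $ i)"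
    from halfsplit[OF inQ' sQ' fin iL refl _ _ sub(2) sub(1)] a
    obtain QA QB where "(\<forall>p\<in>pts r. inbox QA p) \<and> (\<forall>p\<in>pts l. inbox QB p) \<and> sides QA (L/2) \<and> sides QB (L/2)
     \<and> (\<forall>g. strict QA g \<longrightarrow> strict Q g) \<and> (\<forall>g. strict QB g \<longrightarrow> strict Q g)
     \<and> (\<forall>g. \<not> (strict QA g \<and> strict QB g))" by blast
    then show ?thesis unfolding L_def S_def by blast
  qed
qed

lemma cells_exist:
  fixes T :: "(real^'d) stree"
  shows "distinct (leaves T) \<Longrightarrow> split_tree T \<Longrightarrow> (\<forall>p\<in>pts T. inbox Q p) \<Longrightarrow> sides Q (Lmax (pts T) / 2) \<Longrightarrow>
   \<exists>f. f T = Q \<and> (\<forall>x\<in>set (subtrees T). (\<forall>p\<in>pts x. inbox (f x) p) \<and> (\<forall>g. strict (f x) g \<longrightarrow> strict Q g))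
     \<and> (\<forall>x\<in>set (subtrees T). \<forall>P\<in>set (subtrees T). child x P \<longrightarrow> sides (f x) (Lmax (pts P) / 2))
     \<and> (\<forall>x\<in>set (subtrees T). \<forall>y\<in>set (subtrees T). pts x \<inter> pts y = {} \<longrightarrow> (\<forall>g. \<not> (strict (f x) g \<and> strict (f y) g)))"
proof (induction T arbitrary: Q)
  case (SLeaf p)
  show ?case
    by (rule exI[of _ "\<lambda>_. Q"]) (use SLeaf in \<open>auto simp: child_def pts_Leaf\<close>)
next
  case (SNode l r)
  let ?T = "SNode l r"
  define L where "L = Lmax (pts ?T)"
  have dl: "distinct (leaves l)" and dr: "distinct (leaves r)" using SNode.prems(1) by auto
  have stl: "split_tree l" and str: "split_tree r" using SNode.prems(2) by auto
  have dis: "set (subtrees l) \<inter> set (subtrees r) = {}" "?T \<notin> set (subtrees l)" "?T \<notin> set (subtrees r)"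
    using sub_disjoint[OF SNode.prems(1)] by auto
  have Ll: "Lmax (pts l) \<le> L" and Lr: "Lmax (pts r) \<le> L"
    unfolding L_def by (rule Lmax_child, simp add: child_def)+
  obtain Ql Qr where Q: "\<forall>p\<in>pts l. inbox Ql p" "\<forall>p\<in>pts r. inbox Qr p"
     "sides Ql (L / 2)" "sides Qr (L / 2)"
     "\<forall>g. strict Ql g \<longrightarrow> strict Q g" "\<forall>g. strict Qr g \<longrightarrow> strict Q g"
     "\<forall>g. \<not> (strict Ql g \<and> strict Qr g)"
    using split_cells[OF SNode.prems(2,3,4)] unfolding L_def by blast
  have sl: "sides Ql (Lmax (pts l) / 2)" using sides_mono[OF Q(3)] Ll by simp
  have sr: "sides Qr (Lmax (pts r) / 2)" using sides_mono[OF Q(4)] Lr by simp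
  obtain fl where fl: "fl l = Ql"
    "\<forall>x\<in>set (subtrees l). (\<forall>p\<in>pts x. inbox (fl x) p) \<and> (\<forall>g. strict (fl x) g \<longrightarrow> strict Ql g)"
    "\<forall>x\<in>set (subtrees l). \<forall>P\<in>set (subtrees l). child x P \<longrightarrow> sides (fl x) (Lmax (pts P) / 2)"
    "\<forall>x\<in>set (subtrees l). \<forall>y\<in>set (subtrees l). pts x \<inter> pts y = {} \<longrightarrow> (\<forall>g. \<not> (strict (fl x) g \<and> strict (fl y) g))"
    using SNode.IH(1)[OF dl stl Q(1) sl] by blast
  obtain fr where fr: "fr r = Qr"
    "\<forall>x\<in>set (subtrees r). (\<forall>p\<in>pts x. inbox (fr x) p) \<and> (\<forall>g. strict (fr x) g \<longrightarrow> strict Qr g)"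
    "\<forall>x\<in>set (subtrees r). \<forall>P\<in>set (subtrees r). child x P \<longrightarrow> sides (fr x) (Lmax (pts P) / 2)"
    "\<forall>x\<in>set (subtrees r). \<forall>y\<in>set (subtrees r). pts x \<inter> pts y = {} \<longrightarrow> (\<forall>g. \<not> (strict (fr x) g \<and> strict (fr y) g))"
    using SNode.IH(2)[OF dr str Q(2) sr] by blast
  define f where "f x = (if x = ?T then Q else if x \<in> set (subtrees l) then fl x else fr x)" for x
  have fT: "f ?T = Q" by (simp add: f_def)
  have fL: "f x = fl x" if "x \<in> set (subtrees l)" for x using that dis by (auto simp: f_def)
  have fR: "f x = fr x" if "x \<in> set (subtrees r)" for x using that dis by (auto simp: f_def)
  have subT: "set (subtrees ?T) = insert ?T (set (subtrees l) \<union> set (subtrees r))" by simp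
  have P1: "(\<forall>p\<in>pts x. inbox (f x) p) \<and> (\<forall>g. strict (f x) g \<longrightarrow> strict Q g)" if "x \<in> set (subtrees ?T)" for x
  proof -
    from that consider "x = ?T" | "x \<in> set (subtrees l)" | "x \<in> set (subtrees r)" using subT by blast
    then show ?thesis
    proof cases
      case 1 then show ?thesis using fT SNode.prems(3) by simp
    next
      case 2 then show ?thesis using fL fl(2) Q(5) by simp
    next
      case 3 then show ?thesis using fR fr(2) Q(6) by simp
    qed
  qed
  have P2: "sides (f x) (Lmax (pts P) / 2)" if "x \<in> set (subtrees ?T)" "P \<in> set (subtrees ?T)" "child x P" for x P
  proof -
    from that(2) consider "P = ?T" | "P \<in> set (subtrees l)" | "P \<in> set (subtrees r)" using subT by blast
    then show ?thesis
    proof cases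
      case 1
      then have "x = l \<or> x = r" using that(3) by (auto simp: child_def)
      then show ?thesis
      proof
        assume "x = l" then show ?thesis using fL[of l] self_subtree[of l] fl(1) Q(3) 1 L_def by simp
      next
        assume "x = r" then show ?thesis using fR[of r] self_subtree[of r] fr(1) Q(4) 1 L_def by simp
      qed
    next
      case 2
      then have "x \<in> set (subtrees l)" using child_sub that(3) by blast
      then show ?thesis using fL fl(3) 2 that(3) by simp
    next
      case 3
      then have "x \<in> set (subtrees r)" using child_sub that(3) by blast
      then show ?thesis using fR fr(3) 3 that(3) by simp
    qed
  qed
  have P3: "\<not> (strict (f x) g \<and> strict (f y) g)"
    if "x \<in> set (subtrees ?T)" "y \<in> set (subtrees ?T)" "pts x \<inter> pts y = {}" for x y g
  proof -
    have nT: "x \<noteq> ?T" "y \<noteq> ?T"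
    proof -
      show "x \<noteq> ?T"
      proof
        assume "x = ?T"
        then have "pts y \<subseteq> pts x" using subtree_pts[OF that(2)] by simp
        then show False using that(3) pts_ne[of y] by blast
      qed
      show "y \<noteq> ?T"
      proof
        assume "y = ?T"
        then have "pts x \<subseteq> pts y" using subtree_pts[OF that(1)] by simp
        then show False using that(3) pts_ne[of x] by blast
      qed
    qed
    have xs: "x \<in> set (subtrees l) \<or> x \<in> set (subtrees r)" using that(1) nT subT by blast
    have ys: "y \<in> set (subtrees l) \<or> y \<in> set (subtrees r)" using that(2) nT subT by blast
    show ?thesis
    proof (cases "x \<in> set (subtrees l)")
      case xl: True
      show ?thesis
      proof (cases "y \<in> set (subtrees l)")
        case True then show ?thesis using xl fL fl(4) that(3) by simp
      next
        case False then have "y \<in> set (subtrees r)" using ys by blast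
        then show ?thesis using xl fL fR fl(2) fr(2) Q(7) by metis
      qed
    next
      case xr: False
      then have xr: "x \<in> set (subtrees r)" using xs by blast
      show ?thesis
      proof (cases "y \<in> set (subtrees l)")
        case True then show ?thesis using xr fL fR fl(2) fr(2) Q(7) by metis
      next
        case False then have "y \<in> set (subtrees r)" using ys by blast
        then show ?thesis using xr fR fr(4) that(3) by simp
      qed
    qed
  qed
  show ?case using fT P1 P2 P3 by blast
qed



definition fail :: "real \<Rightarrow> (real^'d \<Rightarrow> real) \<Rightarrow> real^'d \<Rightarrow> (real^'d) stree \<Rightarrow> bool" where
  "fail s rad p u \<longleftrightarrow> \<not> ((dist p (bb_center (pts u)) - encl_rad (pts u)) - rad p \<ge> (3 * s + 4) * encl_rad (pts u))"

lemma fpb_len: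
  fixes w :: "(real^'d) stree"
  shows "distinct (leaves w) \<Longrightarrow>
    length (findpairs_ball s rad p w) \<le> 1 + 2 * card {u \<in> set (subtrees w). is_node u \<and> fail s rad p u}"
proof (induction w)
  case (SLeaf x)
  have "findpairs_ball s rad p (SLeaf x) = [({(p, rad p)}, balls_of rad (pts (SLeaf x)))]"
    by (subst findpairs_ball.simps) simp
  then show ?case by simp
next
  case (SNode l r)
  let ?T = "SNode l r"
  show ?case
  proof (cases "fail s rad p ?T")
    case False
    then have "findpairs_ball s rad p ?T = [({(p, rad p)}, balls_of rad (pts ?T))]"
      by (subst findpairs_ball.simps) (simp add: fail_def)
    then show ?thesis by simp
  next
    case True
    then have eq: "findpairs_ball s rad p ?T = findpairs_ball s rad p l @ findpairs_ball s rad p r"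
      by (subst findpairs_ball.simps) (simp add: fail_def)
    have dl: "distinct (leaves l)" and dr: "distinct (leaves r)" using SNode.prems by auto
    have dis: "set (subtrees l) \<inter> set (subtrees r) = {}" "?T \<notin> set (subtrees l)" "?T \<notin> set (subtrees r)"
      using sub_disjoint[OF SNode.prems] by auto
    define Al where "Al = {u \<in> set (subtrees l). is_node u \<and> fail s rad p u}"
    define Ar where "Ar = {u \<in> set (subtrees r). is_node u \<and> fail s rad p u}"
    have "{u \<in> set (subtrees ?T). is_node u \<and> fail s rad p u} = insert ?T (Al \<union> Ar)"
      using True unfolding Al_def Ar_def by auto
    moreover have "card (insert ?T (Al \<union> Ar)) = 1 + card Al + card Ar"
    proof -
      have f: "finite Al" "finite Ar" unfolding Al_def Ar_def by auto
      have "Al \<inter> Ar = {}" using dis unfolding Al_def Ar_def by auto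
      then have "card (Al \<union> Ar) = card Al + card Ar" using f by (simp add: card_Un_disjoint)
      moreover have "?T \<notin> Al \<union> Ar" using dis unfolding Al_def Ar_def by auto
      ultimately show ?thesis using f by simp
    qed
    moreover have "length (findpairs_ball s rad p l) \<le> 1 + 2 * card Al" using SNode.IH(1)[OF dl] Al_def by simp
    moreover have "length (findpairs_ball s rad p r) \<le> 1 + 2 * card Ar" using SNode.IH(2)[OF dr] Ar_def by simp
    ultimately show ?thesis using eq by simp
  qed
qed

lemma fp_props:
  fixes v w :: "(real^'d) stree"
  shows "distinct (leaves v) \<Longrightarrow> distinct (leaves w) \<Longrightarrow> e \<in> set (ck_findpairs s v w) \<Longrightarrow>
    fst e \<in> set (subtrees v) \<and> snd e \<in> set (subtrees w) \<and>
    (well_sep s (pts (fst e)) (pts (snd e)) \<or> (\<not> is_node (fst e) \<and> \<not> is_node (snd e)))"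
proof (induction s v w rule: ck_findpairs.induct)
  case (1 s v w)
  show ?case
  proof (cases "well_sep s (pts v) (pts w)")
    case True
    then have "ck_findpairs s v w = [(v,w)]" by (subst ck_findpairs.simps) simp
    then have "e = (v,w)" using "1.prems"(3) by simp
    then show ?thesis using True self_subtree[of v] self_subtree[of w] by simp
  next
    case nws: False
    show ?thesis
    proof (cases "Lmax (pts v) \<le> Lmax (pts w)")
      case le: True
      show ?thesis
      proof (cases w)
        case (SLeaf x)
        then have eq: "ck_findpairs s v w = [(v,w)]" using nws le by (subst ck_findpairs.simps) simp
        have "\<not> is_node v"
        proof
          assume "is_node v"
          then obtain vl vr where "v = SNode vl vr" by (cases v) auto
          then have "0 < Lmax (pts v)" using node_Lmax_pos "1.prems"(1) by simp
          moreover have "Lmax (pts w) = 0" using SLeaf by (simp add: pts_Leaf single_Lmax)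
          ultimately show False using le by linarith
        qed
        moreover have "e = (v,w)" using "1.prems"(3) eq by simp
        ultimately show ?thesis using SLeaf self_subtree[of v] by simp
      next
        case (SNode wl wr)
        then have eq: "ck_findpairs s v w = ck_findpairs s v wl @ ck_findpairs s v wr"
          using nws le by (subst ck_findpairs.simps) simp
        have d: "distinct (leaves wl)" "distinct (leaves wr)" using "1.prems"(2) SNode by auto
        from "1.prems"(3) eq consider "e \<in> set (ck_findpairs s v wl)" | "e \<in> set (ck_findpairs s v wr)" by auto
        then show ?thesis
        proof cases
          case 1
          have h: "fst e \<in> set (subtrees v) \<and> snd e \<in> set (subtrees wl) \<and>
            (well_sep s (pts (fst e)) (pts (snd e)) \<or> (\<not> is_node (fst e) \<and> \<not> is_node (snd e)))"
            using "1.IH"(1)[OF nws le SNode "1.prems"(1) d(1) 1] .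
          have "set (subtrees wl) \<subseteq> set (subtrees w)" using SNode by auto
          then show ?thesis using h by blast
        next
          case 2
          have h: "fst e \<in> set (subtrees v) \<and> snd e \<in> set (subtrees wr) \<and>
            (well_sep s (pts (fst e)) (pts (snd e)) \<or> (\<not> is_node (fst e) \<and> \<not> is_node (snd e)))"
            using "1.IH"(2)[OF nws le SNode "1.prems"(1) d(2) 2] .
          have "set (subtrees wr) \<subseteq> set (subtrees w)" using SNode by auto
          then show ?thesis using h by blast
        qed
      qed
    next
      case gt: False
      show ?thesis
      proof (cases v)
        case (SLeaf x)
        have "Lmax (pts v) = 0" using SLeaf by (simp add: pts_Leaf single_Lmax)
        moreover have "0 \<le> Lmax (pts w)" by (rule Lmax_nonneg[OF finite_pts pts_ne])
        ultimately show ?thesis using gt by linarith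
      next
        case (SNode vl vr)
        then have eq: "ck_findpairs s v w = ck_findpairs s vl w @ ck_findpairs s vr w"
          using nws gt by (subst ck_findpairs.simps) simp
        have d: "distinct (leaves vl)" "distinct (leaves vr)" using "1.prems"(1) SNode by auto
        from "1.prems"(3) eq consider "e \<in> set (ck_findpairs s vl w)" | "e \<in> set (ck_findpairs s vr w)" by auto
        then show ?thesis
        proof cases
          case 1
          have h: "fst e \<in> set (subtrees vl) \<and> snd e \<in> set (subtrees w) \<and>
            (well_sep s (pts (fst e)) (pts (snd e)) \<or> (\<not> is_node (fst e) \<and> \<not> is_node (snd e)))"
            using "1.IH"(3)[OF nws gt SNode d(1) "1.prems"(2) 1] .
          have "set (subtrees vl) \<subseteq> set (subtrees v)" using SNode by auto
          then show ?thesis using h by blast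
        next
          case 2
          have h: "fst e \<in> set (subtrees vr) \<and> snd e \<in> set (subtrees w) \<and>
            (well_sep s (pts (fst e)) (pts (snd e)) \<or> (\<not> is_node (fst e) \<and> \<not> is_node (snd e)))"
            using "1.IH"(4)[OF nws gt SNode d(2) "1.prems"(2) 2] .
          have "set (subtrees vr) \<subseteq> set (subtrees v)" using SNode by auto
          then show ?thesis using h by blast
        qed
      qed
    qed
  qed
qed

lemma wspd_props:
  fixes T :: "(real^'d) stree"
  shows "distinct (leaves T) \<Longrightarrow> e \<in> set (ck_wspd s T) \<Longrightarrow>
    fst e \<in> set (subtrees T) \<and> snd e \<in> set (subtrees T) \<and>
    (well_sep s (pts (fst e)) (pts (snd e)) \<or> (\<not> is_node (fst e) \<and> \<not> is_node (snd e)))"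
proof (induction T)
  case (SLeaf x)
  then show ?case by simp
next
  case (SNode l r)
  have dl: "distinct (leaves l)" and dr: "distinct (leaves r)" using SNode.prems by auto
  from SNode.prems(2) consider "e \<in> set (ck_wspd s l)" | "e \<in> set (ck_wspd s r)" | "e \<in> set (ck_findpairs s l r)"
    by auto
  then show ?case
  proof cases
    case 1 then show ?thesis using SNode.IH(1)[OF dl] by auto
  next
    case 2 then show ?thesis using SNode.IH(2)[OF dr] by auto
  next
    case 3 then show ?thesis using fp_props[OF dl dr 3] by auto
  qed
qed

lemma subball:
  fixes p z :: "real^'d"
  assumes e: "0 < e" "e \<le> r" and d: "dist p z \<le> r + t" and t: "0 \<le> t"
  shows "\<exists>c. cball c e \<subseteq> cball p r \<and> dist c z \<le> t + e"
proof (cases "dist p z \<le> r - e")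
  case True
  have "cball z e \<subseteq> cball p r"
  proof
    fix y assume "y \<in> cball z e"
    then have "dist z y \<le> e" by simp
    then have "dist p y \<le> r" using True dist_triangle[of p y z] by linarith
    then show "y \<in> cball p r" by simp
  qed
  then show ?thesis using e t by (intro exI[of _ z]) auto
next
  case False
  define D where "D = dist p z"
  have Dpos: "0 < D" using False e unfolding D_def by auto
  define a where "a = (r - e) / D"
  have a: "0 \<le> a" "a < 1" using False e Dpos unfolding a_def D_def by (auto simp: field_simps)
  define c where "c = p + a *\<^sub>R (z - p)"
  have pc: "dist p c = r - e"
  proof -
    have "dist p c = norm (a *\<^sub>R (z - p))" unfolding c_def by (simp add: dist_norm)
    also have "\<dots> = a * D" using a unfolding D_def by (simp add: dist_norm norm_minus_commute)
    also have "\<dots> = r - e" using Dpos unfolding a_def by simp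
    finally show ?thesis .
  qed
  have cz: "dist c z = D - (r - e)"
  proof -
    have zc: "z - c = (1 - a) *\<^sub>R (z - p)" unfolding c_def by (simp add: algebra_simps)
    have "dist c z = norm (z - c)" by (simp add: dist_norm norm_minus_commute)
    also have "\<dots> = (1 - a) * norm (z - p)" unfolding zc using a by simp
    also have "\<dots> = (1 - a) * D" unfolding D_def by (simp add: dist_norm norm_minus_commute)
    also have "\<dots> = D - (r - e)" using Dpos unfolding a_def by (simp add: field_simps)
    finally show ?thesis .
  qed
  have "cball c e \<subseteq> cball p r"
  proof
    fix y assume "y \<in> cball c e"
    then have "dist c y \<le> e" by simp
    then have "dist p y \<le> r" using pc dist_triangle[of p y c] by linarith
    then show "y \<in> cball p r" by simp
  qed
  moreover have "dist c z \<le> t + e" using cz d unfolding D_def by linarith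
  ultimately show ?thesis by blast
qed

lemma ball_packing:
  fixes A :: "(real^'d) set" and rad :: "real^'d \<Rightarrow> real" and z :: "real^'d"
  assumes e: "0 < e" and K: "0 \<le> K"
    and disj: "\<forall>p\<in>A. \<forall>q\<in>A. p \<noteq> q \<longrightarrow> cball p (rad p) \<inter> cball q (rad q) = {}"
    and big: "\<forall>p\<in>A. e \<le> rad p \<and> dist p z \<le> rad p + K * e"
  shows "finite A \<and> real (card A) \<le> (4 * ((K + 1) * sqrt (real CARD('d)) / 2) + 5) ^ CARD('d)"
proof -
  have "\<forall>p\<in>A. \<exists>c. cball c e \<subseteq> cball p (rad p) \<and> dist c z \<le> K * e + e"
  proof
    fix p assume "p \<in> A"
    then have "e \<le> rad p" "dist p z \<le> rad p + K * e" using big by auto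
    then show "\<exists>c. cball c e \<subseteq> cball p (rad p) \<and> dist c z \<le> K * e + e"
      using subball[OF e _ _ mult_nonneg_nonneg[OF K less_imp_le[OF e]]] by blast
  qed
  then obtain C where C: "\<forall>p\<in>A. cball (C p) e \<subseteq> cball p (rad p) \<and> dist (C p) z \<le> K * e + e"
    by metis
  define sd where "sd = sqrt (real CARD('d))"
  have sd: "0 < sd" unfolding sd_def by simp
  define w where "w = e / sd"
  have w: "0 < w" using e sd unfolding w_def by simp
  define c where "c = (K + 1) * sd / 2"
  have c: "0 \<le> c" using K sd unfolding c_def by simp
  have cd: "c * (2 * w) = (K + 1) * e" unfolding c_def w_def using sd by (simp add: field_simps)
  have res: "finite A \<and> real (card A) \<le> (4*c+5) ^ CARD('d)"
  proof (rule packing[where lo = "\<lambda>p i. C p $ i - w" and hi = "\<lambda>p i. C p $ i + w" and x = C and z = z])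
    show "0 < 2 * w" using w by simp
    show "0 \<le> c" by (rule c)
    show "\<forall>a\<in>A. \<forall>i. 2 * w \<le> C a $ i + w - (C a $ i - w)" by simp
    show "\<forall>a\<in>A. \<forall>i. C a $ i - w \<le> C a $ i \<and> C a $ i \<le> C a $ i + w" using w by simp
    show "\<forall>a\<in>A. \<forall>i. \<bar>C a $ i - z $ i\<bar> \<le> c * (2 * w)"
    proof (intro ballI allI)
      fix a i assume "a \<in> A"
      then have "dist (C a) z \<le> K * e + e" using C by blast
      moreover have "\<bar>C a $ i - z $ i\<bar> \<le> dist (C a) z"
        using component_le_norm_cart[of "C a - z" i] by (simp add: dist_norm)
      ultimately show "\<bar>C a $ i - z $ i\<bar> \<le> c * (2 * w)" using cd by (simp add: algebra_simps)
    qed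
    show "\<forall>a\<in>A. \<forall>b\<in>A. a \<noteq> b \<longrightarrow> \<not> (\<exists>g. \<forall>i. C a $ i - w < g i \<and> g i < C a $ i + w \<and> C b $ i - w < g i \<and> g i < C b $ i + w)"
    proof (intro ballI impI notI)
      fix a b assume ab: "a \<in> A" "b \<in> A" "a \<noteq> b"
      assume "\<exists>g. \<forall>i. C a $ i - w < g i \<and> g i < C a $ i + w \<and> C b $ i - w < g i \<and> g i < C b $ i + w"
      then obtain g where g: "\<forall>i. C a $ i - w < g i \<and> g i < C a $ i + w \<and> C b $ i - w < g i \<and> g i < C b $ i + w" by blast
      define v :: "real^'d" where "v = (\<chi> i. g i)"
      have "norm (v - C a) < sd * w"
        unfolding sd_def
      proof (rule norm_less_comp)
        fix i
        have e1: "(v - C a) $ i = g i - C a $ i" by (simp add: v_def)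
        have "C a $ i - w < g i" "g i < C a $ i + w" using g by auto
        then show "\<bar>(v - C a) $ i\<bar> < w" unfolding e1 by (auto simp: abs_less_iff)
      qed
      then have "v \<in> cball (C a) e" using sd unfolding w_def by (simp add: dist_norm norm_minus_commute)
      then have va: "v \<in> cball a (rad a)" using C ab(1) by blast
      have "norm (v - C b) < sd * w"
        unfolding sd_def
      proof (rule norm_less_comp)
        fix i
        have e1: "(v - C b) $ i = g i - C b $ i" by (simp add: v_def)
        have "C b $ i - w < g i" "g i < C b $ i + w" using g by auto
        then show "\<bar>(v - C b) $ i\<bar> < w" unfolding e1 by (auto simp: abs_less_iff)
      qed
      then have "v \<in> cball (C b) e" using sd unfolding w_def by (simp add: dist_norm norm_minus_commute)
      then have vb: "v \<in> cball b (rad b)" using C ab(2) by blast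
      show False using disj ab va vb by blast
    qed
  qed
  then show ?thesis unfolding c_def sd_def .
qed



fun childs :: "'a stree \<Rightarrow> 'a stree list" where
  "childs (SLeaf x) = []"
| "childs (SNode l r) = [l, r]"

lemma child_childs: "child y P \<Longrightarrow> y \<in> set (childs P)"
  unfolding child_def by auto

fun leafpt :: "('a stree \<times> 'a stree) \<Rightarrow> 'a" where
  "leafpt (SLeaf p, w) = p"
| "leafpt (SNode a b, SLeaf q) = q"
| "leafpt (SNode a b, SNode c d) = undefined"

definition charges :: "real \<Rightarrow> (real^'d \<Rightarrow> real) \<Rightarrow> ((real^'d) stree \<times> (real^'d) stree) \<Rightarrow> (real^'d) stree \<Rightarrow> bool" where
  "charges s rad e u \<longleftrightarrow> (\<exists>p w. (e = (SLeaf p, w) \<or> e = (w, SLeaf p)) \<and> is_node w \<and> u \<in> set (subtrees w) \<and> is_node u \<and> fail s rad p u)"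

lemma charges_leafpt:
  assumes "charges s rad e u"
  shows "\<exists>w. (e = (SLeaf (leafpt e), w) \<or> e = (w, SLeaf (leafpt e))) \<and> is_node w \<and> u \<in> set (subtrees w) \<and> is_node u \<and> fail s rad (leafpt e) u"
proof -
  obtain p w where pw: "e = (SLeaf p, w) \<or> e = (w, SLeaf p)" "is_node w" "u \<in> set (subtrees w)" "is_node u" "fail s rad p u"
    using assms unfolding charges_def by blast
  have "leafpt e = p"
  proof (cases "e = (SLeaf p, w)")
    case True then show ?thesis by simp
  next
    case False
    then have "e = (w, SLeaf p)" using pw(1) by blast
    moreover obtain a b where "w = SNode a b" using pw(2) by (cases w) auto
    ultimately show ?thesis by simp
  qed
  then show ?thesis using pw by blast
qed

lemma geo:
  fixes p :: "real^'d"
  assumes ws: "well_sep (3 * s + 6) {p} W" and fin: "finite W" and UW: "U \<subseteq> W" "U \<noteq> {}"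
    and fl: "\<not> ((dist p (bb_center U) - encl_rad U) - r \<ge> (3 * s + 4) * encl_rad U)" and s: "0 < s"
  shows "encl_rad U \<le> r \<and> dist p (bb_center U) \<le> r + (3 * s + 5) * encl_rad U"
proof -
  define eW where "eW = encl_rad W"
  define eU where "eU = encl_rad U"
  have finU: "finite U" using finite_subset[OF UW(1) fin] .
  have eW0: "0 \<le> eW" unfolding eW_def using encl_rad_nonneg[OF fin] UW by auto
  have eU0: "0 \<le> eU" unfolding eU_def using encl_rad_nonneg[OF finU UW(2)] .
  have eUW: "eU \<le> eW" unfolding eU_def eW_def by (rule encl_rad_mono[OF fin UW])
  have cc: "dist (bb_center U) (bb_center W) \<le> eW" unfolding eW_def by (rule dist_center_sub[OF fin UW])
  have "max (encl_rad {p}) (encl_rad W) = eW" using eW0 by (simp add: single_encl eW_def)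
  then have w1: "dist p (bb_center W) - 2 * eW \<ge> (3 * s + 6) * eW"
    using ws unfolding well_sep_def Let_def by (simp add: single_center)
  have ab: "s * eU \<le> s * eW" using eUW s by (simp add: mult_left_mono)
  have w2: "dist p (bb_center W) \<ge> 3 * (s * eW) + 8 * eW" using w1 by (simp add: algebra_simps)
  have f2: "dist p (bb_center U) - eU - r < 3 * (s * eU) + 4 * eU" using fl unfolding eU_def[symmetric]
    by (simp add: algebra_simps)
  have tri: "dist p (bb_center W) \<le> dist p (bb_center U) + dist (bb_center U) (bb_center W)"
    by (rule dist_triangle)
  have g1: "eU \<le> r" using w2 f2 tri cc ab eUW eU0 by linarith
  have g2: "dist p (bb_center U) \<le> r + (3 * (s * eU) + 5 * eU)" using f2 by linarith
  show ?thesis using g1 g2 unfolding eU_def by (simp add: algebra_simps)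
qed

lemma sum_card_swap:
  assumes "finite E" "finite U"
  shows "(\<Sum>e\<in>E. card {u\<in>U. R e u}) = (\<Sum>u\<in>U. card {e\<in>E. R e u})"
proof -
  have 1: "card {u\<in>U. R e u} = (\<Sum>u\<in>U. if R e u then 1 else 0)" for e
    using assms(2) by (simp add: sum.If_cases Int_def)
  have 2: "card {e\<in>E. R e u} = (\<Sum>e\<in>E. if R e u then 1 else 0)" for u
    using assms(1) by (simp add: sum.If_cases Int_def)
  show ?thesis unfolding 1 2 by (rule sum.swap)
qed

lemma E_bound:
  fixes T :: "(real^'d) stree"
  assumes s: "0 < s" and dT: "distinct (leaves T)"
    and disjb: "\<forall>p\<in>pts T. \<forall>q\<in>pts T. p \<noteq> q \<longrightarrow> cball p (rad p) \<inter> cball q (rad q) = {}"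
    and u: "u \<in> set (subtrees T)"
  shows "real (card {e \<in> set (ck_wspd (3 * s + 6) T). charges s rad e u})
     \<le> (4 * ((3 * s + 5 + 1) * sqrt (real CARD('d)) / 2) + 5) ^ CARD('d)"
proof (cases "is_node u")
  case False
  then have emp: "{e \<in> set (ck_wspd (3 * s + 6) T). charges s rad e u} = {}" unfolding charges_def by auto
  have "0 \<le> (4 * ((3 * s + 5 + 1) * sqrt (real CARD('d)) / 2) + 5) ^ CARD('d)" using s by simp
  then show ?thesis unfolding emp by simp
next
  case True
  let ?L = "ck_wspd (3 * s + 6) T"
  define Eu where "Eu = {e \<in> set ?L. charges s rad e u}"
  define eu where "eu = encl_rad (pts u)"
  obtain ul ur where uN: "u = SNode ul ur" using True by (cases u) auto
  have du: "distinct (leaves u)" using distinct_sub[OF dT u] .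
  have eu: "0 < eu" unfolding eu_def uN using node_encl_pos du uN by blast
  define B where "B = {p \<in> pts T. eu \<le> rad p \<and> dist p (bb_center (pts u)) \<le> rad p + (3 * s + 5) * eu}"
  have Bp: "finite B \<and> real (card B) \<le> (4 * ((3 * s + 5 + 1) * sqrt (real CARD('d)) / 2) + 5) ^ CARD('d)"
    by (rule ball_packing[OF eu]) (use s disjb in \<open>auto simp: B_def\<close>)
  have props: "\<exists>w. (e = (SLeaf (leafpt e), w) \<or> e = (w, SLeaf (leafpt e))) \<and> is_node w \<and> u \<in> set (subtrees w)
      \<and> leafpt e \<in> pts T \<and> leafpt e \<notin> pts w \<and> well_sep (3 * s + 6) {leafpt e} (pts w) \<and> fail s rad (leafpt e) u"
    if "e \<in> Eu" for e
  proof -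
    from that have eL: "e \<in> set ?L" and ch: "charges s rad e u" unfolding Eu_def by auto
    obtain w where w: "e = (SLeaf (leafpt e), w) \<or> e = (w, SLeaf (leafpt e))" "is_node w" "u \<in> set (subtrees w)"
      "fail s rad (leafpt e) u"
      using charges_leafpt[OF ch] by blast
    have wp: "fst e \<in> set (subtrees T) \<and> snd e \<in> set (subtrees T) \<and>
      (well_sep (3 * s + 6) (pts (fst e)) (pts (snd e)) \<or> (\<not> is_node (fst e) \<and> \<not> is_node (snd e)))"
      using wspd_props[OF dT eL] .
    have disj: "pts (fst e) \<inter> pts (snd e) = {}" using wspd_disj[OF dT, of "fst e" "snd e"] eL by simp
    from w(1) show ?thesis
    proof
      assume e: "e = (SLeaf (leafpt e), w)"
      have fe: "SLeaf (leafpt e) \<in> set (subtrees T)" using wp e by (metis fst_conv)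
      have "leafpt e \<in> pts T" using subtree_pts[OF fe] by (simp add: pts_Leaf)
      moreover have "well_sep (3 * s + 6) {leafpt e} (pts w)" using wp e w(2) by (metis fst_conv snd_conv pts_Leaf)
      moreover have "pts (SLeaf (leafpt e)) \<inter> pts w = {}" using disj e by (metis fst_conv snd_conv)
      then have "leafpt e \<notin> pts w" by (auto simp: pts_Leaf)
      ultimately show ?thesis using w by blast
    next
      assume e: "e = (w, SLeaf (leafpt e))"
      have fe: "SLeaf (leafpt e) \<in> set (subtrees T)" using wp e by (metis snd_conv)
      have "leafpt e \<in> pts T" using subtree_pts[OF fe] by (simp add: pts_Leaf)
      moreover have "well_sep (3 * s + 6) (pts w) {leafpt e}" using wp e w(2) by (metis fst_conv snd_conv pts_Leaf)
      then have "well_sep (3 * s + 6) {leafpt e} (pts w)" by (simp add: well_sep_sym)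
      moreover have "pts w \<inter> pts (SLeaf (leafpt e)) = {}" using disj e by (metis fst_conv snd_conv)
      then have "leafpt e \<notin> pts w" by (auto simp: pts_Leaf)
      ultimately show ?thesis using w by blast
    qed
  qed
  have img: "leafpt ` Eu \<subseteq> B"
  proof
    fix p assume "p \<in> leafpt ` Eu"
    then obtain e where e: "e \<in> Eu" "p = leafpt e" by blast
    obtain w where w: "is_node w" "u \<in> set (subtrees w)" "p \<in> pts T" "well_sep (3 * s + 6) {p} (pts w)" "fail s rad p u"
      using props[OF e(1)] e(2) by blast
    have sub: "pts u \<subseteq> pts w" using subtree_pts[OF w(2)] .
    have "encl_rad (pts u) \<le> rad p \<and> dist p (bb_center (pts u)) \<le> rad p + (3 * s + 5) * encl_rad (pts u)"
      by (rule geo[OF w(4) finite_pts sub pts_ne[of u] w(5)[unfolded fail_def] s])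
    then show "p \<in> B" unfolding B_def eu_def using w(3) by blast
  qed
  have inj: "inj_on leafpt Eu"
  proof (rule inj_onI)
    fix e1 e2 assume e12: "e1 \<in> Eu" "e2 \<in> Eu" "leafpt e1 = leafpt e2"
    define p where "p = leafpt e1"
    obtain q where q: "q \<in> pts u" using pts_ne[of u] by blast
    have L12: "e1 \<in> set ?L" "e2 \<in> set ?L" using e12 unfolding Eu_def by auto
    obtain w1 where w1: "e1 = (SLeaf p, w1) \<or> e1 = (w1, SLeaf p)" "u \<in> set (subtrees w1)" "p \<notin> pts w1"
      using props[OF e12(1)] unfolding p_def by blast
    obtain w2 where w2: "e2 = (SLeaf p, w2) \<or> e2 = (w2, SLeaf p)" "u \<in> set (subtrees w2)"
      using props[OF e12(2)] e12(3) unfolding p_def by metis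
    have q1: "q \<in> pts w1" using subtree_pts[OF w1(2)] q by blast
    have q2: "q \<in> pts w2" using subtree_pts[OF w2(2)] q by blast
    have pq: "p \<noteq> q" using q1 w1(3) by blast
    have mixed: False if "ea \<in> set ?L" "eb \<in> set ?L" "p \<in> pts (fst ea)" "q \<in> pts (snd ea)"
      "q \<in> pts (fst eb)" "p \<in> pts (snd eb)" for ea eb
    proof -
      have "1 \<le> cnt ?L p q" using cnt_ge[OF that(1,3,4)] .
      moreover have "1 \<le> cnt ?L q p" using cnt_ge[OF that(2,5,6)] .
      moreover have "cnt ?L p q + cnt ?L q p \<le> 1" using wspd_cnt[OF dT, of "3 * s + 6" p q] by simp
      ultimately show False by linarith
    qed
    from w1(1) w2(1) show "e1 = e2"
    proof (elim disjE)
      assume a: "e1 = (SLeaf p, w1)" "e2 = (SLeaf p, w2)"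
      show "e1 = e2" by (rule wspd_uniq[OF dT L12, of p q]) (use a q1 q2 in \<open>auto simp: pts_Leaf\<close>)
    next
      assume a: "e1 = (SLeaf p, w1)" "e2 = (w2, SLeaf p)"
      show "e1 = e2" using mixed[OF L12] a q1 q2 by (auto simp: pts_Leaf)
    next
      assume a: "e1 = (w1, SLeaf p)" "e2 = (SLeaf p, w2)"
      show "e1 = e2" using mixed[OF L12(2,1)] a q1 q2 by (auto simp: pts_Leaf)
    next
      assume a: "e1 = (w1, SLeaf p)" "e2 = (w2, SLeaf p)"
      show "e1 = e2" by (rule wspd_uniq[OF dT L12, of q p]) (use a q1 q2 in \<open>auto simp: pts_Leaf\<close>)
    qed
  qed
  have "card Eu \<le> card B" using card_inj_on_le[OF inj img] Bp by blast
  then show ?thesis using Bp unfolding Eu_def by linarith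
qed



lemma node_packing:
  fixes T :: "(real^'d) stree"
  assumes s: "0 \<le> s" and dT: "distinct (leaves T)" and spl: "split_tree T"
    and Xs: "\<forall>x\<in>Xs. Gc s (set (subtrees T)) P x y"
    and dj: "\<forall>x1\<in>Xs. \<forall>x2\<in>Xs. x1 \<noteq> x2 \<longrightarrow> pts x1 \<inter> pts x2 = {}"
  shows "finite Xs \<and> real (card Xs) \<le> (4 * ((s + 3) * sqrt (real CARD('d))) + 5) ^ CARD('d)"
proof (cases "Xs = {}")
  case True
  then show ?thesis using s by simp
next
  case False
  let ?ST = "set (subtrees T)"
  obtain x0 where "x0 \<in> Xs" using False by blast
  then have G0: "Gc s ?ST P x0 y" using Xs by blast
  then have cy: "child y P" and PST: "P \<in> ?ST" unfolding Gc_def by auto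
  obtain Pa Pb where PN: "P = SNode Pa Pb" using cy unfolding child_def by blast
  have dP: "distinct (leaves P)" using distinct_sub[OF dT PST] .
  define \<delta> where "\<delta> = Lmax (pts P) / 2"
  have dpos: "0 < \<delta>" unfolding \<delta>_def using node_Lmax_pos dP PN by simp
  define Q0 :: "('d \<Rightarrow> real) \<times> ('d \<Rightarrow> real)" where
    "Q0 = (\<lambda>i. bb_lo (pts T) i, \<lambda>i. bb_lo (pts T) i + Lmax (pts T))"
  have inQ0: "\<forall>p\<in>pts T. inbox Q0 p"
  proof
    fix p assume p: "p \<in> pts T"
    show "inbox Q0 p" unfolding inbox_def Q0_def
    proof
      fix i
      have "bb_lo (pts T) i \<le> p $ i" "p $ i \<le> bb_hi (pts T) i"
        using bb_lo_le[OF finite_pts p] bb_hi_ge[OF finite_pts p] by auto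
      moreover have "bb_hi (pts T) i - bb_lo (pts T) i \<le> Lmax (pts T)" by (rule Lmax_ge)
      ultimately show "fst (\<lambda>i. bb_lo (pts T) i, \<lambda>i. bb_lo (pts T) i + Lmax (pts T)) i \<le> p $ i \<and>
          p $ i \<le> snd (\<lambda>i. bb_lo (pts T) i, \<lambda>i. bb_lo (pts T) i + Lmax (pts T)) i" by simp
    qed
  qed
  have sQ0: "sides Q0 (Lmax (pts T) / 2)"
    unfolding sides_def Q0_def using Lmax_nonneg[OF finite_pts pts_ne, of T] by simp
  obtain f where f:
    "\<forall>x\<in>?ST. (\<forall>p\<in>pts x. inbox (f x) p) \<and> (\<forall>g. strict (f x) g \<longrightarrow> strict Q0 g)"
    "\<forall>x\<in>?ST. \<forall>P\<in>?ST. child x P \<longrightarrow> sides (f x) (Lmax (pts P) / 2)"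
    "\<forall>x\<in>?ST. \<forall>y\<in>?ST. pts x \<inter> pts y = {} \<longrightarrow> (\<forall>g. \<not> (strict (f x) g \<and> strict (f y) g))"
    using cells_exist[OF dT spl inQ0 sQ0] by blast
  define xp where "xp x = (SOME p. p \<in> pts x)" for x :: "(real^'d) stree"
  have xp: "xp x \<in> pts x" for x unfolding xp_def using pts_ne[of x] by (simp add: some_in_eq)
  define sd where "sd = sqrt (real CARD('d))"
  have sd: "0 < sd" unfolding sd_def by simp
  have eP: "encl_rad (pts P) = sd * \<delta>" unfolding encl_rad_def sd_def \<delta>_def by simp
  have info: "x \<in> ?ST \<and> sides (f x) \<delta> \<and> inbox (f x) (xp x) \<and> dist (xp x) (bb_center (pts P)) \<le> (s + 3) * sd * \<delta>"
    if x: "x \<in> Xs" for x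
  proof -
    have G: "Gc s ?ST P x y" using Xs x by blast
    then obtain Px where Px: "Px \<in> ?ST" "child x Px" "Lmax (pts P) \<le> Lmax (pts Px)"
      and nws: "\<not> well_sep s (pts x) (pts P)" and lx: "Lmax (pts x) \<le> Lmax (pts P)"
      unfolding Gc_def by blast
    have xST: "x \<in> ?ST" using child_sub[OF Px(2) Px(1)] .
    have "sides (f x) (Lmax (pts Px) / 2)" using f(2) xST Px by blast
    then have sx: "sides (f x) \<delta>" using sides_mono Px(3) unfolding \<delta>_def by fastforce
    have ix: "inbox (f x) (xp x)" using f(1) xST xp by blast
    have ex: "encl_rad (pts x) \<le> encl_rad (pts P)" unfolding encl_rad_def using lx by (simp add: mult_left_mono)
    have ex0: "0 \<le> encl_rad (pts x)" by (rule encl_rad_nonneg[OF finite_pts pts_ne])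
    have "max (encl_rad (pts x)) (encl_rad (pts P)) = encl_rad (pts P)" using ex by simp
    then have d1: "dist (bb_center (pts x)) (bb_center (pts P)) < (s + 2) * encl_rad (pts P)"
      using nws unfolding well_sep_def Let_def by (simp add: algebra_simps)
    have d2: "dist (xp x) (bb_center (pts x)) \<le> encl_rad (pts x)" by (rule dist_center_pt[OF finite_pts xp])
    have "dist (xp x) (bb_center (pts P)) \<le> dist (xp x) (bb_center (pts x)) + dist (bb_center (pts x)) (bb_center (pts P))"
      by (rule dist_triangle)
    also have "\<dots> \<le> (s + 3) * encl_rad (pts P)" using d1 d2 ex by (simp add: algebra_simps)
    finally have "dist (xp x) (bb_center (pts P)) \<le> (s + 3) * sd * \<delta>" using eP by (simp add: algebra_simps)
    then show ?thesis using xST sx ix by blast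
  qed
  have res: "finite Xs \<and> real (card Xs) \<le> (4 * ((s + 3) * sd) + 5) ^ CARD('d)"
  proof (rule packing[where lo = "\<lambda>a. fst (f a)" and hi = "\<lambda>a. snd (f a)" and x = xp and z = "bb_center (pts P)"])
    show "0 < \<delta>" by (rule dpos)
    show "0 \<le> (s + 3) * sd" using s sd by simp
    show "\<forall>a\<in>Xs. \<forall>i. \<delta> \<le> snd (f a) i - fst (f a) i" using info unfolding sides_def by blast
    show "\<forall>a\<in>Xs. \<forall>i. fst (f a) i \<le> xp a $ i \<and> xp a $ i \<le> snd (f a) i" using info unfolding inbox_def by blast
    show "\<forall>a\<in>Xs. \<forall>i. \<bar>xp a $ i - bb_center (pts P) $ i\<bar> \<le> (s + 3) * sd * \<delta>"
    proof (intro ballI allI)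
      fix a i assume "a \<in> Xs"
      then have "dist (xp a) (bb_center (pts P)) \<le> (s + 3) * sd * \<delta>" using info by blast
      moreover have "\<bar>xp a $ i - bb_center (pts P) $ i\<bar> \<le> dist (xp a) (bb_center (pts P))"
        using component_le_norm_cart[of "xp a - bb_center (pts P)" i] by (simp add: dist_norm)
      ultimately show "\<bar>xp a $ i - bb_center (pts P) $ i\<bar> \<le> (s + 3) * sd * \<delta>" by linarith
    qed
    show "\<forall>a\<in>Xs. \<forall>b\<in>Xs. a \<noteq> b \<longrightarrow>
      \<not> (\<exists>g. \<forall>i. fst (f a) i < g i \<and> g i < snd (f a) i \<and> fst (f b) i < g i \<and> g i < snd (f b) i)"
    proof (intro ballI impI notI)
      fix a b assume ab: "a \<in> Xs" "b \<in> Xs" "a \<noteq> b"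
      assume "\<exists>g. \<forall>i. fst (f a) i < g i \<and> g i < snd (f a) i \<and> fst (f b) i < g i \<and> g i < snd (f b) i"
      then obtain g where g: "\<forall>i. fst (f a) i < g i \<and> g i < snd (f a) i \<and> fst (f b) i < g i \<and> g i < snd (f b) i" by blast
      have "strict (f a) g" "strict (f b) g" using g unfolding strict_def by auto
      moreover have "a \<in> ?ST" "b \<in> ?ST" using info ab by auto
      moreover have "pts a \<inter> pts b = {}" using dj ab by blast
      ultimately show False using f(3) by blast
    qed
  qed
  then show ?thesis unfolding sd_def .
qed



lemma card_childs: "card (set (childs P)) \<le> 2"
  by (cases P) (auto simp: card_insert_if)

lemma Lset_bound:
  fixes T :: "(real^'d) stree"
  assumes s: "0 \<le> s" and dT: "distinct (leaves T)" and spl: "split_tree T"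
  shows "real (card (set (ck_wspd s T))) \<le>
    (1 + 4 * (4 * ((s + 3) * sqrt (real CARD('d))) + 5) ^ CARD('d)) * real (card (set (subtrees T)))"
proof -
  let ?ST = "set (subtrees T)" and ?L = "ck_wspd s T"
  define K where "K = (4 * ((s + 3) * sqrt (real CARD('d))) + 5) ^ CARD('d)"
  have K0: "0 \<le> K" unfolding K_def using s by simp
  define tp where "tp u = (case u of SNode l r \<Rightarrow> (l, r) | SLeaf x \<Rightarrow> (u, u))" for u :: "(real^'d) stree"
  define Top where "Top = tp ` ?ST"
  define X1 where "X1 P y = {x. (x,y) \<in> set ?L \<and> Gc s ?ST P x y}" for P y
  define X2 where "X2 P y = {x. (y,x) \<in> set ?L \<and> Gc s ?ST P x y}" for P y
  define G1 where "G1 = (\<Union>P\<in>?ST. \<Union>y\<in>set (childs P). (\<lambda>x. (x,y)) ` X1 P y)"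
  define G2 where "G2 = (\<Union>P\<in>?ST. \<Union>y\<in>set (childs P). (\<lambda>x. (y,x)) ` X2 P y)"
  have cover: "set ?L \<subseteq> Top \<union> G1 \<union> G2"
  proof
    fix e assume eL: "e \<in> set ?L"
    obtain a b where e: "e = (a,b)" by (cases e)
    from wspd_classify[OF self_subtree eL]
    consider (t) "\<exists>l r. SNode l r \<in> ?ST \<and> e = (l,r)" | (g1) "\<exists>P. Gc s ?ST P a b" | (g2) "\<exists>P. Gc s ?ST P b a"
      using e by auto
    then show "e \<in> Top \<union> G1 \<union> G2"
    proof cases
      case t
      then obtain l r where "SNode l r \<in> ?ST" "e = (l,r)" by blast
      then have "tp (SNode l r) = e" "SNode l r \<in> ?ST" unfolding tp_def by simp_all
      then have "e \<in> Top" unfolding Top_def by (metis image_eqI)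
      then show ?thesis by blast
    next
      case g1
      then obtain P where G: "Gc s ?ST P a b" by blast
      then have "P \<in> ?ST" "child b P" unfolding Gc_def by auto
      then have "P \<in> ?ST" "b \<in> set (childs P)" using child_childs by auto
      moreover have "a \<in> X1 P b" unfolding X1_def using G eL e by auto
      ultimately have "e \<in> G1" unfolding G1_def e by blast
      then show ?thesis by blast
    next
      case g2
      then obtain P where G: "Gc s ?ST P b a" by blast
      then have "P \<in> ?ST" "child a P" unfolding Gc_def by auto
      then have "P \<in> ?ST" "a \<in> set (childs P)" using child_childs by auto
      moreover have "b \<in> X2 P a" unfolding X2_def using G eL e by auto
      ultimately have "e \<in> G2" unfolding G2_def e by blast
      then show ?thesis by blast
    qed
  qed
  have X1b: "finite (X1 P y) \<and> real (card (X1 P y)) \<le> K" for P y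
    unfolding K_def
  proof (rule node_packing[OF s dT spl])
    show "\<forall>x\<in>X1 P y. Gc s ?ST P x y" unfolding X1_def by blast
    show "\<forall>x1\<in>X1 P y. \<forall>x2\<in>X1 P y. x1 \<noteq> x2 \<longrightarrow> pts x1 \<inter> pts x2 = {}"
    proof (intro ballI impI)
      fix x1 x2 assume x: "x1 \<in> X1 P y" "x2 \<in> X1 P y" "x1 \<noteq> x2"
      show "pts x1 \<inter> pts x2 = {}"
      proof (rule ccontr)
        assume "pts x1 \<inter> pts x2 \<noteq> {}"
        then obtain p where p: "p \<in> pts x1" "p \<in> pts x2" by blast
        obtain q where q: "q \<in> pts y" using pts_ne[of y] by blast
        have "(x1,y) \<in> set ?L" "(x2,y) \<in> set ?L" using x unfolding X1_def by auto
        from wspd_uniq[OF dT this, of p q] p q have "(x1,y) = (x2,y)" by simp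
        then show False using x(3) by simp
      qed
    qed
  qed
  have X2b: "finite (X2 P y) \<and> real (card (X2 P y)) \<le> K" for P y
    unfolding K_def
  proof (rule node_packing[OF s dT spl])
    show "\<forall>x\<in>X2 P y. Gc s ?ST P x y" unfolding X2_def by blast
    show "\<forall>x1\<in>X2 P y. \<forall>x2\<in>X2 P y. x1 \<noteq> x2 \<longrightarrow> pts x1 \<inter> pts x2 = {}"
    proof (intro ballI impI)
      fix x1 x2 assume x: "x1 \<in> X2 P y" "x2 \<in> X2 P y" "x1 \<noteq> x2"
      show "pts x1 \<inter> pts x2 = {}"
      proof (rule ccontr)
        assume "pts x1 \<inter> pts x2 \<noteq> {}"
        then obtain p where p: "p \<in> pts x1" "p \<in> pts x2" by blast
        obtain q where q: "q \<in> pts y" using pts_ne[of y] by blast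
        have "(y,x1) \<in> set ?L" "(y,x2) \<in> set ?L" using x unfolding X2_def by auto
        from wspd_uniq[OF dT this, of q p] p q have "(y,x1) = (y,x2)" by simp
        then show False using x(3) by simp
      qed
    qed
  qed
  have finST: "finite ?ST" by simp
  have Gb: "real (card (\<Union>P\<in>?ST. \<Union>y\<in>set (childs P). F P y)) \<le> 2 * K * real (card ?ST)"
    if FX: "\<And>P y. finite (F P y) \<and> real (card (F P y)) \<le> K" for F
  proof -
    have "card (\<Union>P\<in>?ST. \<Union>y\<in>set (childs P). F P y) \<le> (\<Sum>P\<in>?ST. card (\<Union>y\<in>set (childs P). F P y))"
      by (rule card_UN_le[OF finST])
    also have "\<dots> \<le> (\<Sum>P\<in>?ST. \<Sum>y\<in>set (childs P). card (F P y))"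
      by (rule sum_mono) (rule card_UN_le, simp)
    finally have "real (card (\<Union>P\<in>?ST. \<Union>y\<in>set (childs P). F P y)) \<le> real (\<Sum>P\<in>?ST. \<Sum>y\<in>set (childs P). card (F P y))"
      by (simp only: of_nat_le_iff)
    also have "\<dots> = (\<Sum>P\<in>?ST. \<Sum>y\<in>set (childs P). real (card (F P y)))"
      by (simp add: of_nat_sum)
    also have "\<dots> \<le> (\<Sum>P\<in>?ST. \<Sum>y\<in>set (childs P). K)"
      by (intro sum_mono) (use FX in blast)
    also have "\<dots> = (\<Sum>P\<in>?ST. real (card (set (childs P))) * K)" by simp
    also have "\<dots> \<le> (\<Sum>P\<in>?ST. 2 * K)"
    proof (rule sum_mono)
      fix P
      have "real (card (set (childs P))) \<le> 2" using card_childs[of P] by simp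
      then show "real (card (set (childs P))) * K \<le> 2 * K" using K0 by (simp add: mult_right_mono)
    qed
    also have "\<dots> = 2 * K * real (card ?ST)" by simp
    finally show ?thesis .
  qed
  have F1: "finite ((\<lambda>x. (x,y)) ` X1 P y) \<and> real (card ((\<lambda>x. (x,y)) ` X1 P y)) \<le> K" for P y
  proof -
    have f: "finite (X1 P y)" and k: "real (card (X1 P y)) \<le> K" using X1b[of P y] by auto
    have "card ((\<lambda>x. (x,y)) ` X1 P y) \<le> card (X1 P y)" by (rule card_image_le[OF f])
    then have "real (card ((\<lambda>x. (x,y)) ` X1 P y)) \<le> real (card (X1 P y))" by (simp only: of_nat_le_iff)
    then have "real (card ((\<lambda>x. (x,y)) ` X1 P y)) \<le> K" using k by linarith
    moreover have "finite ((\<lambda>x. (x,y)) ` X1 P y)" using f by simp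
    ultimately show ?thesis by blast
  qed
  have F2: "finite ((\<lambda>x. (y,x)) ` X2 P y) \<and> real (card ((\<lambda>x. (y,x)) ` X2 P y)) \<le> K" for P y
  proof -
    have f: "finite (X2 P y)" and k: "real (card (X2 P y)) \<le> K" using X2b[of P y] by auto
    have "card ((\<lambda>x. (y,x)) ` X2 P y) \<le> card (X2 P y)" by (rule card_image_le[OF f])
    then have "real (card ((\<lambda>x. (y,x)) ` X2 P y)) \<le> real (card (X2 P y))" by (simp only: of_nat_le_iff)
    then have "real (card ((\<lambda>x. (y,x)) ` X2 P y)) \<le> K" using k by linarith
    moreover have "finite ((\<lambda>x. (y,x)) ` X2 P y)" using f by simp
    ultimately show ?thesis by blast
  qed
  have g1: "real (card G1) \<le> 2 * K * real (card ?ST)" unfolding G1_def by (rule Gb) (rule F1)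
  have g2: "real (card G2) \<le> 2 * K * real (card ?ST)" unfolding G2_def by (rule Gb) (rule F2)
  have fG1: "finite G1" unfolding G1_def
    by (rule finite_UN_I[OF finST], rule finite_UN_I, simp) (use F1 in blast)
  have fG2: "finite G2" unfolding G2_def
    by (rule finite_UN_I[OF finST], rule finite_UN_I, simp) (use F2 in blast)
  have fT: "finite Top" unfolding Top_def by simp
  have t: "card Top \<le> card ?ST" unfolding Top_def by (rule card_image_le[OF finST])
  have fU: "finite (Top \<union> G1 \<union> G2)" using fG1 fG2 fT by simp
  have "card (set ?L) \<le> card (Top \<union> G1 \<union> G2)" by (rule card_mono[OF fU cover])
  also have "\<dots> \<le> card Top + card G1 + card G2"
    using card_Un_le[of "Top \<union> G1" G2] card_Un_le[of Top G1] by linarith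
  finally have "real (card (set ?L)) \<le> real (card Top + card G1 + card G2)"
    by (simp only: of_nat_le_iff)
  then have "real (card (set ?L)) \<le> real (card Top) + real (card G1) + real (card G2)"
    by simp
  also have "\<dots> \<le> real (card ?ST) + 2 * K * real (card ?ST) + 2 * K * real (card ?ST)"
    using t g1 g2 by simp
  also have "\<dots> = (1 + 4 * K) * real (card ?ST)" by (simp add: algebra_simps)
  finally show ?thesis unfolding K_def .
qed

lemma pp_len:
  fixes T :: "(real^'d) stree"
  assumes dT: "distinct (leaves T)" and eL: "e \<in> set (ck_wspd s' T)"
  shows "length (process_pair s rad e) \<le> 1 + 2 * card {u \<in> set (subtrees T). charges s rad e u}"
proof -
  obtain a b where e: "e = (a, b)" by (cases e)
  have ab: "a \<in> set (subtrees T)" "b \<in> set (subtrees T)" using wspd_props[OF dT eL] e by auto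
  have fin: "finite {u \<in> set (subtrees T). charges s rad e u}" by simp
  show ?thesis
  proof (cases a)
    case (SLeaf p)
    show ?thesis
    proof (cases b)
      case (SLeaf q)
      then show ?thesis using e \<open>a = SLeaf p\<close> by simp
    next
      case (SNode wl wr)
      have db: "distinct (leaves b)" using distinct_sub[OF dT ab(2)] .
      have "length (process_pair s rad e) = length (findpairs_ball s rad p b)"
        using e SLeaf SNode by simp
      also have "\<dots> \<le> 1 + 2 * card {u \<in> set (subtrees b). is_node u \<and> fail s rad p u}"
        by (rule fpb_len[OF db])
      also have "\<dots> \<le> 1 + 2 * card {u \<in> set (subtrees T). charges s rad e u}"
      proof -
        have "{u \<in> set (subtrees b). is_node u \<and> fail s rad p u} \<subseteq> {u \<in> set (subtrees T). charges s rad e u}"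
        proof
          fix u assume u: "u \<in> {u \<in> set (subtrees b). is_node u \<and> fail s rad p u}"
          then have "u \<in> set (subtrees T)" using subtree_trans[OF ab(2)] by blast
          moreover have "charges s rad e u" unfolding charges_def
            using u e SLeaf SNode by (intro exI[of _ p] exI[of _ b]) auto
          ultimately show "u \<in> {u \<in> set (subtrees T). charges s rad e u}" by blast
        qed
        then show ?thesis using card_mono[OF fin] by simp
      qed
      finally show ?thesis .
    qed
  next
    case (SNode vl vr)
    show ?thesis
    proof (cases b)
      case (SLeaf q)
      have da: "distinct (leaves a)" using distinct_sub[OF dT ab(1)] .
      have "length (process_pair s rad e) = length (findpairs_ball s rad q a)"
        using e SLeaf SNode by simp
      also have "\<dots> \<le> 1 + 2 * card {u \<in> set (subtrees a). is_node u \<and> fail s rad q u}"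
        by (rule fpb_len[OF da])
      also have "\<dots> \<le> 1 + 2 * card {u \<in> set (subtrees T). charges s rad e u}"
      proof -
        have "{u \<in> set (subtrees a). is_node u \<and> fail s rad q u} \<subseteq> {u \<in> set (subtrees T). charges s rad e u}"
        proof
          fix u assume u: "u \<in> {u \<in> set (subtrees a). is_node u \<and> fail s rad q u}"
          then have "u \<in> set (subtrees T)" using subtree_trans[OF ab(1)] by blast
          moreover have "charges s rad e u" unfolding charges_def
            using u e SLeaf SNode by (intro exI[of _ q] exI[of _ a]) auto
          ultimately show "u \<in> {u \<in> set (subtrees T). charges s rad e u}" by blast
        qed
        then show ?thesis using card_mono[OF fin] by simp
      qed
      finally show ?thesis .
    next
      case (SNode wl wr)
      then show ?thesis using e \<open>a = SNode vl vr\<close> by simp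
    qed
  qed
qed

lemma main_bound:
  fixes T :: "(real^'d) stree"
  assumes s: "0 < s" and dT: "distinct (leaves T)" and spl: "split_tree T"
    and disjb: "\<forall>p\<in>pts T. \<forall>q\<in>pts T. p \<noteq> q \<longrightarrow> cball p (rad p) \<inter> cball q (rad q) = {}"
  shows "real (length (concat (map (process_pair s rad) (ck_wspd (3 * s + 6) T))))
    \<le> 2 * (1 + 4 * (4 * ((3 * s + 6 + 3) * sqrt (real CARD('d))) + 5) ^ CARD('d)
           + 2 * (4 * ((3 * s + 5 + 1) * sqrt (real CARD('d)) / 2) + 5) ^ CARD('d)) * real (length (leaves T))"
proof -
  let ?L = "ck_wspd (3 * s + 6) T" and ?ST = "set (subtrees T)"
  define K1 where "K1 = (4 * ((3 * s + 6 + 3) * sqrt (real CARD('d))) + 5) ^ CARD('d)"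
  define K2 where "K2 = (4 * ((3 * s + 5 + 1) * sqrt (real CARD('d)) / 2) + 5) ^ CARD('d)"
  have K10: "0 \<le> K1" unfolding K1_def using s by simp
  have K20: "0 \<le> K2" unfolding K2_def using s by simp
  have dL: "distinct ?L" by (rule wspd_distinct[OF dT])
  have finL: "finite (set ?L)" by simp
  have finST: "finite ?ST" by simp
  have "length (concat (map (process_pair s rad) ?L)) = sum_list (map (\<lambda>e. length (process_pair s rad e)) ?L)"
    by (simp add: length_concat comp_def)
  also have "\<dots> = (\<Sum>e\<in>set ?L. length (process_pair s rad e))"
    by (rule sum_list_distinct_conv_sum_set[OF dL])
  also have "\<dots> \<le> (\<Sum>e\<in>set ?L. 1 + 2 * card {u \<in> ?ST. charges s rad e u})"
    by (rule sum_mono) (rule pp_len[OF dT])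
  also have "\<dots> = card (set ?L) + 2 * (\<Sum>e\<in>set ?L. card {u \<in> ?ST. charges s rad e u})"
    by (simp only: sum.distrib card_eq_sum sum_distrib_left)
  also have "\<dots> = card (set ?L) + 2 * (\<Sum>u\<in>?ST. card {e \<in> set ?L. charges s rad e u})"
    by (simp add: sum_card_swap[OF finL finST])
  finally have "real (length (concat (map (process_pair s rad) ?L))) \<le>
      real (card (set ?L) + 2 * (\<Sum>u\<in>?ST. card {e \<in> set ?L. charges s rad e u}))"
    by (simp only: of_nat_le_iff)
  also have "\<dots> = real (card (set ?L)) + 2 * (\<Sum>u\<in>?ST. real (card {e \<in> set ?L. charges s rad e u}))"
    by (simp add: of_nat_sum)
  finally have tot: "real (length (concat (map (process_pair s rad) ?L))) \<le>
      real (card (set ?L)) + 2 * (\<Sum>u\<in>?ST. real (card {e \<in> set ?L. charges s rad e u}))" .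
  have "(\<Sum>u\<in>?ST. real (card {e \<in> set ?L. charges s rad e u})) \<le> (\<Sum>u\<in>?ST. K2)"
    by (rule sum_mono) (unfold K2_def, rule E_bound[OF s dT disjb])
  also have "\<dots> = K2 * real (card ?ST)" by simp
  finally have t2: "(\<Sum>u\<in>?ST. real (card {e \<in> set ?L. charges s rad e u})) \<le> K2 * real (card ?ST)" .
  have s6: "0 \<le> 3 * s + 6" using s by simp
  have t1: "real (card (set ?L)) \<le> (1 + 4 * K1) * real (card ?ST)"
    unfolding K1_def by (rule Lset_bound[OF s6 dT spl])
  have cST: "real (card ?ST) \<le> 2 * real (length (leaves T))"
  proof -
    have "card ?ST \<le> length (subtrees T)" by (rule card_length)
    also have "\<dots> \<le> 2 * length (leaves T)" using length_subtrees[of T] by linarith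
    finally show ?thesis by simp
  qed
  have "real (length (concat (map (process_pair s rad) ?L))) \<le> (1 + 4 * K1) * real (card ?ST) + 2 * (K2 * real (card ?ST))"
    using tot t1 t2 by linarith
  also have "\<dots> = (1 + 4 * K1 + 2 * K2) * real (card ?ST)" by (simp add: algebra_simps)
  also have "\<dots> \<le> (1 + 4 * K1 + 2 * K2) * (2 * real (length (leaves T)))"
    by (rule mult_left_mono[OF cST]) (use K10 K20 in simp)
  finally have "real (length (concat (map (process_pair s rad) ?L))) \<le> (1 + 4 * K1 + 2 * K2) * (2 * real (length (leaves T)))" .
  then show ?thesis unfolding K1_def[symmetric] K2_def[symmetric] by (simp add: algebra_simps)
qed



theorem corollary1:
  fixes s :: real
  assumes "s > 0"
  shows "\<exists>C::real. \<forall>(n::nat) (c :: nat \<Rightarrow> real^'d) (r :: nat \<Rightarrow> real) (T :: (real^'d) stree).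
           (\<forall>i<n. 0 \<le> r i) \<and>
           (\<forall>i<n. \<forall>j<n. i \<noteq> j \<longrightarrow> cball (c i) (r i) \<inter> cball (c j) (r j) = {}) \<and>
           split_tree T \<and> distinct (leaves T) \<and> set (leaves T) = c ` {..<n}
           \<longrightarrow> real (length (compute_wspd s c r n T)) \<le> C * real n"
proof -
  define K1 where "K1 = (4 * ((3 * s + 6 + 3) * sqrt (real CARD('d))) + 5) ^ CARD('d)"
  define K2 where "K2 = (4 * ((3 * s + 5 + 1) * sqrt (real CARD('d)) / 2) + 5) ^ CARD('d)"
  define C where "C = 2 * (1 + 4 * K1 + 2 * K2)"
  have C0: "0 \<le> C" unfolding C_def K1_def K2_def using assms by simp
  show ?thesis
  proof (rule exI[of _ C], intro allI impI, elim conjE)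
    fix n and c :: "nat \<Rightarrow> real^'d" and r :: "nat \<Rightarrow> real" and T :: "(real^'d) stree"
    assume r0: "\<forall>i<n. 0 \<le> r i"
      and dj: "\<forall>i<n. \<forall>j<n. i \<noteq> j \<longrightarrow> cball (c i) (r i) \<inter> cball (c j) (r j) = {}"
      and spl: "split_tree T" and dT: "distinct (leaves T)" and lv: "set (leaves T) = c ` {..<n}"
    have inj: "inj_on c {..<n}"
    proof (rule inj_onI)
      fix i j assume ij: "i \<in> {..<n}" "j \<in> {..<n}" "c i = c j"
      show "i = j"
      proof (rule ccontr)
        assume "i \<noteq> j"
        moreover have "i < n" "j < n" using ij by auto
        ultimately have "cball (c i) (r i) \<inter> cball (c j) (r j) = {}" using dj by blast
        moreover have "c i \<in> cball (c i) (r i)" "c i \<in> cball (c j) (r j)" using r0 ij by auto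
        ultimately show False by blast
      qed
    qed
    define rad where "rad = (\<lambda>p. r (inv_into {..<n} c p))"
    have radc: "rad (c i) = r i" if "i < n" for i
      unfolding rad_def using inv_into_f_f[OF inj] that by simp
    have disjb: "\<forall>p\<in>pts T. \<forall>q\<in>pts T. p \<noteq> q \<longrightarrow> cball p (rad p) \<inter> cball q (rad q) = {}"
    proof (intro ballI impI)
      fix p q assume pq: "p \<in> pts T" "q \<in> pts T" "p \<noteq> q"
      obtain i where i: "i < n" "p = c i" using pq(1) lv unfolding pts_def by auto
      obtain j where j: "j < n" "q = c j" using pq(2) lv unfolding pts_def by auto
      have "i \<noteq> j" using i j pq(3) by auto
      then show "cball p (rad p) \<inter> cball q (rad q) = {}" using dj i j radc by auto
    qed
    have eq: "compute_wspd s c r n T = concat (map (process_pair s rad) (ck_wspd (3 * s + 6) T))"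
      unfolding compute_wspd_def rad_def by (simp add: Let_def)
    have mb: "real (length (compute_wspd s c r n T)) \<le> C * real (length (leaves T))"
      unfolding eq C_def K1_def K2_def by (rule main_bound[OF assms dT spl disjb])
    have "length (leaves T) = card (c ` {..<n})" using distinct_card[OF dT] lv by simp
    also have "\<dots> \<le> n" using card_image_le[of "{..<n}" c] by simp
    finally have "real (length (leaves T)) \<le> real n" by simp
    then have "C * real (length (leaves T)) \<le> C * real n" using C0 by (simp add: mult_left_mono)
    then show "real (length (compute_wspd s c r n T)) \<le> C * real n" using mb by linarith
  qed
qed


end
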